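(* Let $\mathfrak{n}^{\mathbb{Q}}$ be a finite-dimensional graded rational Lie algebra and let $m\geq 2$. Let $\tilde{\mathfrak{n}}^{\mathbb{Q}}=\mathfrak{n}^{\mathbb{Q}}\oplus\cdots\oplus\mathfrak{n}^{\mathbb{Q}}$ ($m$ copies, direct sum of Lie algebras) and $\tilde{\mathfrak{n}}^{\mathbb{R}}=\mathbb{R}\otimes_{\mathbb{Q}}\tilde{\mathfrak{n}}^{\mathbb{Q}}$. Then there exists a rational form of $\tilde{\mathfrak{n}}^{\mathbb{R}}$ which is Anosov.
   Context: A Lie algebra $\mathfrak{n}$ over a field is graded if there are subspaces $\mathfrak{n}_1,\ldots,\mathfrak{n}_k$ with $\mathfrak{n}=\mathfrak{n}_1\oplus\cdots\oplus\mathfrak{n}_k$ and $[\mathfrak{n}_i,\mathfrak{n}_j]\subseteq\mathfrak{n}_{i+j}$ (with $\mathfrak{n}_l=0$ for $l>k$). A rational form of a real Lie algebra $\mathfrak{g}$ is a rational Lie subalgebra $\mathfrak{m}\subseteq \mathfrak{g}$ such that a $\mathbb{Q}$-basis of $\mathfrak{m}$ is an $\mathbb{R}$-basis of $\mathfrak{g}$. A rational Lie algebra is Anosov if it admits an automorphism that is hyperbolic (no eigenvalue of absolute value $1$) and integer-like (characteristic polynomial with integer coefficients and determinant $\pm1$). *)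

theory Defs
  imports Complex_Main "Jordan_Normal_Form.Char_Poly"
begin

text \<open>A finite-dimensional Lie algebra of
dimension d is given by structure constants c i j k (for i,j,k < d):
[e_i, e_j] = sum_k c i j k e_k.\<close>

definition vecs :: "nat \<Rightarrow> (nat \<Rightarrow> 'a::zero) set" where
  "vecs N = {x. \<forall>k\<ge>N. x k = 0}"

definition vadd :: "(nat \<Rightarrow> 'a::plus) \<Rightarrow> (nat \<Rightarrow> 'a) \<Rightarrow> nat \<Rightarrow> 'a" where
  "vadd x y = (\<lambda>k. x k + y k)"

definition smul :: "'a::times \<Rightarrow> (nat \<Rightarrow> 'a) \<Rightarrow> nat \<Rightarrow> 'a" where
  "smul a x = (\<lambda>k. a * x k)"

definition vsum :: "('i \<Rightarrow> nat \<Rightarrow> 'a::comm_monoid_add) \<Rightarrow> 'i set \<Rightarrow> nat \<Rightarrow> 'a" where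
  "vsum v I = (\<lambda>k. \<Sum>i\<in>I. v i k)"

definition sc_bracket :: "nat \<Rightarrow> (nat \<Rightarrow> nat \<Rightarrow> nat \<Rightarrow> 'a::field) \<Rightarrow>
    (nat \<Rightarrow> 'a) \<Rightarrow> (nat \<Rightarrow> 'a) \<Rightarrow> nat \<Rightarrow> 'a" where
  "sc_bracket d c x y = (\<lambda>k. if k < d then (\<Sum>i<d. \<Sum>j<d. x i * y j * c i j k) else 0)"

definition lie_sc :: "nat \<Rightarrow> (nat \<Rightarrow> nat \<Rightarrow> nat \<Rightarrow> 'a::field) \<Rightarrow> bool" where
  "lie_sc d c \<longleftrightarrow>
     (\<forall>i<d. \<forall>j<d. \<forall>k<d. c i j k = - c j i k) \<and>
     (\<forall>i<d. \<forall>j<d. \<forall>k<d. \<forall>s<d.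
        (\<Sum>l<d. c i j l * c l k s + c j k l * c l i s + c k i l * c l j s) = 0)"

definition subsp :: "nat \<Rightarrow> (nat \<Rightarrow> 'a::field) set \<Rightarrow> bool" where
  "subsp d V \<longleftrightarrow> V \<subseteq> vecs d \<and> (\<lambda>_. 0) \<in> V \<and>
     (\<forall>x\<in>V. \<forall>y\<in>V. vadd x y \<in> V) \<and> (\<forall>a. \<forall>x\<in>V. smul a x \<in> V)"

definition graded_sc :: "nat \<Rightarrow> (nat \<Rightarrow> nat \<Rightarrow> nat \<Rightarrow> 'a::field) \<Rightarrow> bool" where
  "graded_sc d c \<longleftrightarrow> (\<exists>(k::nat) (V :: nat \<Rightarrow> (nat \<Rightarrow> 'a) set).
     (\<forall>i\<in>{1..k}. subsp d (V i)) \<and>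
     (\<forall>x\<in>vecs d. \<exists>!v. (\<forall>i. v i \<in> (if i \<in> {1..k} then V i else {\<lambda>_. 0})) \<and>
                        x = vsum v {1..k}) \<and>
     (\<forall>i\<in>{1..k}. \<forall>j\<in>{1..k}. \<forall>x\<in>V i. \<forall>y\<in>V j.
        sc_bracket d c x y \<in> (if i + j \<le> k then V (i + j) else {\<lambda>_. 0})))"

text \<open>Structure constants of the direct sum of m copies of the Lie algebra with
structure constants c (dimension d); the a-th copy occupies indices a*d, ..., a*d + d - 1.\<close>
definition dsum_sc :: "nat \<Rightarrow> nat \<Rightarrow> (nat \<Rightarrow> nat \<Rightarrow> nat \<Rightarrow> 'a::zero) \<Rightarrow> nat \<Rightarrow> nat \<Rightarrow> nat \<Rightarrow> 'a" where
  "dsum_sc m d c p q r =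
     (if p div d = q div d \<and> q div d = r div d then c (p mod d) (q mod d) (r mod d) else 0)"

definition rat_indep :: "nat \<Rightarrow> (nat \<Rightarrow> nat \<Rightarrow> real) \<Rightarrow> bool" where
  "rat_indep r b \<longleftrightarrow> (\<forall>q::nat \<Rightarrow> rat.
      vsum (\<lambda>i. smul (of_rat (q i)) (b i)) {..<r} = (\<lambda>_. 0) \<longrightarrow> (\<forall>i<r. q i = 0))"

definition real_indep :: "nat \<Rightarrow> (nat \<Rightarrow> nat \<Rightarrow> real) \<Rightarrow> bool" where
  "real_indep r b \<longleftrightarrow> (\<forall>q::nat \<Rightarrow> real.
      vsum (\<lambda>i. smul (q i) (b i)) {..<r} = (\<lambda>_. 0) \<longrightarrow> (\<forall>i<r. q i = 0))"

definition rat_span :: "nat \<Rightarrow> (nat \<Rightarrow> nat \<Rightarrow> real) \<Rightarrow> (nat \<Rightarrow> real) set" where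
  "rat_span r b = {vsum (\<lambda>i. smul (of_rat (q i)) (b i)) {..<r} | q :: nat \<Rightarrow> rat. True}"

definition real_span :: "nat \<Rightarrow> (nat \<Rightarrow> nat \<Rightarrow> real) \<Rightarrow> (nat \<Rightarrow> real) set" where
  "real_span r b = {vsum (\<lambda>i. smul (q i) (b i)) {..<r} | q :: nat \<Rightarrow> real. True}"

definition rat_basis :: "(nat \<Rightarrow> real) set \<Rightarrow> nat \<Rightarrow> (nat \<Rightarrow> nat \<Rightarrow> real) \<Rightarrow> bool" where
  "rat_basis M r b \<longleftrightarrow> (\<forall>i<r. b i \<in> M) \<and> rat_indep r b \<and> M = rat_span r b"

definition rat_lie_subalg ::
    "nat \<Rightarrow> ((nat \<Rightarrow> real) \<Rightarrow> (nat \<Rightarrow> real) \<Rightarrow> nat \<Rightarrow> real) \<Rightarrow> (nat \<Rightarrow> real) set \<Rightarrow> bool" where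
  "rat_lie_subalg N B M \<longleftrightarrow> M \<subseteq> vecs N \<and> (\<lambda>_. 0) \<in> M \<and>
     (\<forall>x\<in>M. \<forall>y\<in>M. vadd x y \<in> M) \<and> (\<forall>q::rat. \<forall>x\<in>M. smul (of_rat q) x \<in> M) \<and>
     (\<forall>x\<in>M. \<forall>y\<in>M. B x y \<in> M)"

definition rational_form ::
    "nat \<Rightarrow> ((nat \<Rightarrow> real) \<Rightarrow> (nat \<Rightarrow> real) \<Rightarrow> nat \<Rightarrow> real) \<Rightarrow> (nat \<Rightarrow> real) set \<Rightarrow> bool" where
  "rational_form N B M \<longleftrightarrow> rat_lie_subalg N B M \<and>
     (\<exists>r b. rat_basis M r b \<and> real_indep r b \<and> real_span r b = vecs N)"

definition hyperbolic_mat :: "rat mat \<Rightarrow> bool" where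
  "hyperbolic_mat A \<longleftrightarrow> (\<forall>z::complex. eigenvalue (map_mat of_rat A) z \<longrightarrow> cmod z \<noteq> 1)"

definition integer_like_mat :: "rat mat \<Rightarrow> bool" where
  "integer_like_mat A \<longleftrightarrow> (\<forall>i. coeff (char_poly A) i \<in> \<int>) \<and> (det A = 1 \<or> det A = -1)"

definition anosov ::
    "((nat \<Rightarrow> real) \<Rightarrow> (nat \<Rightarrow> real) \<Rightarrow> nat \<Rightarrow> real) \<Rightarrow> (nat \<Rightarrow> real) set \<Rightarrow> bool" where
  "anosov B M \<longleftrightarrow> (\<exists>f r b (A :: rat mat).
     rat_basis M r b \<and> A \<in> carrier_mat r r \<and>
     bij_betw f M M \<and>
     (\<forall>x\<in>M. \<forall>y\<in>M. f (vadd x y) = vadd (f x) (f y)) \<and>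
     (\<forall>q::rat. \<forall>x\<in>M. f (smul (of_rat q) x) = smul (of_rat q) (f x)) \<and>
     (\<forall>x\<in>M. \<forall>y\<in>M. f (B x y) = B (f x) (f y)) \<and>
     (\<forall>j<r. f (b j) = vsum (\<lambda>i. smul (of_rat (A $$ (i, j))) (b i)) {..<r}) \<and>
     hyperbolic_mat A \<and> integer_like_mat A)"

end

theory Submission
  imports Defs
begin


section \<open>Vandermonde injectivity and Lagrange\<close>

lemma vand_inj:
  fixes x :: "nat \<Rightarrow> 'b::real_normed_field" and \<rho> :: "nat \<Rightarrow> real"
  assumes inj: "inj_on \<rho> {..<m}"
    and z: "\<forall>a<m. (\<Sum>t<m. x t * of_real (\<rho> a) ^ t) = 0"
  shows "\<forall>t<m. x t = 0"
proof -
  define p where "p = (\<Sum>t<m. monom (x t) t)"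
  have cp: "coeff p t = (if t < m then x t else 0)" for t
    unfolding p_def by (simp add: coeff_sum)
  have pv: "poly p y = (\<Sum>t<m. x t * y ^ t)" for y
    unfolding p_def by (simp add: poly_sum poly_monom)
  have "p = 0"
  proof (rule ccontr)
    assume np: "p \<noteq> 0"
    have "degree p < m"
    proof -
      from np obtain t where "coeff p t \<noteq> 0" by (metis leading_coeff_0_iff)
      hence "m > 0" using cp by (auto split: if_splits)
      have "degree p \<le> m - 1"
        by (rule degree_le) (auto simp: cp)
      thus ?thesis using \<open>m > 0\<close> by linarith
    qed
    have sub: "(\<lambda>a. of_real (\<rho> a) :: 'b) ` {..<m} \<subseteq> {y. poly p y = 0}"
      using z by (auto simp: pv)
    have "card ((\<lambda>a. of_real (\<rho> a) :: 'b) ` {..<m}) = m"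
      by (subst card_image) (auto intro!: inj_onI dest: inj_onD[OF inj])
    moreover have "card ((\<lambda>a. of_real (\<rho> a) :: 'b) ` {..<m}) \<le> card {y. poly p y = 0}"
      by (rule card_mono[OF poly_roots_finite[OF np] sub])
    moreover have "card {y. poly p y = 0} \<le> degree p" by (rule card_poly_roots_bound[OF np])
    ultimately show False using \<open>degree p < m\<close> by linarith
  qed
  thus ?thesis using cp by (metis coeff_0)
qed

lemma poly_as_sum_lt:
  fixes p :: "'a::comm_semiring_1 poly"
  assumes "degree p < m"
  shows "poly p y = (\<Sum>t<m. coeff p t * y ^ t)"
proof -
  have "poly p y = (\<Sum>t\<le>degree p. coeff p t * y ^ t)" by (rule poly_altdef)
  also have "\<dots> = (\<Sum>t<m. coeff p t * y ^ t)"
    by (rule sum.mono_neutral_left) (use assms in \<open>auto simp: coeff_eq_0\<close>)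
  finally show ?thesis .
qed

lemma lagrange:
  fixes \<rho> :: "nat \<Rightarrow> real"
  assumes inj: "inj_on \<rho> {..<m}"
  shows "\<exists>L. \<forall>a<m. \<forall>a'<m. (\<Sum>t<m. L a t * \<rho> a' ^ t) = (if a = a' then 1 else 0)"
proof -
  define q where "q a = (\<Prod>b\<in>{..<m}-{a}. [:- \<rho> b, 1:])" for a
  define p where "p a = Polynomial.smult (1 / (\<Prod>b\<in>{..<m}-{a}. (\<rho> a - \<rho> b))) (q a)" for a
  have pq: "poly (q a) y = (\<Prod>b\<in>{..<m}-{a}. (y - \<rho> b))" for a y
    unfolding q_def by (simp add: poly_prod)
  have dq: "degree (q a) < m" if "a < m" for a
  proof -
    have "degree (q a) \<le> (\<Sum>b\<in>{..<m}-{a}. degree [:- \<rho> b, 1:])"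
      unfolding q_def using degree_prod_sum_le[of "{..<m}-{a}" "\<lambda>b. [:- \<rho> b, 1:]"] by (simp add: o_def)
    also have "\<dots> = card ({..<m}-{a})" by simp
    also have "\<dots> = m - 1" using that by simp
    finally show ?thesis using that by linarith
  qed
  have dp: "degree (p a) < m" if "a < m" for a
    using dq[OF that] unfolding p_def by (meson degree_smult_le le_less_trans)
  show ?thesis
  proof (intro exI allI impI)
    fix a a' assume a: "a < m" and a': "a' < m"
    have "(\<Sum>t<m. coeff (p a) t * \<rho> a' ^ t) = poly (p a) (\<rho> a')"
      by (rule poly_as_sum_lt[OF dp[OF a], symmetric])
    also have "\<dots> = (if a = a' then 1 else 0)"
    proof (cases "a = a'")
      case True
      have "(\<Prod>b\<in>{..<m}-{a}. (\<rho> a - \<rho> b)) \<noteq> 0"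
        using a by (auto simp: prod_zero_iff dest: inj_onD[OF inj])
      thus ?thesis using True unfolding p_def by (simp add: pq)
    next
      case False
      have "(\<Prod>b\<in>{..<m}-{a}. (\<rho> a' - \<rho> b)) = 0"
        using a' False by (auto simp: prod_zero_iff)
      thus ?thesis using False unfolding p_def by (simp add: pq)
    qed
    finally show "(\<Sum>t<m. coeff (p a) t * \<rho> a' ^ t) = (if a = a' then 1 else 0)" .
  qed
qed




definition Inv :: "nat \<Rightarrow> nat \<Rightarrow> real poly \<Rightarrow> (nat \<Rightarrow> real) \<Rightarrow> bool" where
  "Inv j n P \<rho> \<longleftrightarrow> degree P = n \<and> lead_coeff P = 1 \<and> (\<forall>t. coeff P t \<in> \<int>) \<and>
     (coeff P 0 = 1 \<or> coeff P 0 = -1) \<and> inj_on \<rho> {..<n} \<and>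
     (\<forall>a<n. poly P (\<rho> a) = 0 \<and> \<rho> a < 3 * real j + 2 \<and>
        \<not> (- 1 / (3 * real j + 3) \<le> \<rho> a \<and> \<rho> a \<le> 0) \<and> \<bar>\<rho> a\<bar> \<noteq> 1)"

lemma coeff_mult_Ints:
  assumes "\<forall>t. coeff p t \<in> \<int>" "\<forall>t. coeff q t \<in> \<int>"
  shows "\<forall>t. coeff (p * q) t \<in> \<int>"
  using assms by (auto simp: coeff_mult intro!: Ints_sum Ints_mult)

lemma Inv_step:
  assumes I: "Inv j n P \<rho>"
  shows "\<exists>P' \<rho>'. Inv (Suc j) (n + 2) P' \<rho>'"
proof -
  define N :: real where "N = 3 * (real j + 1)"
  have N3: "N \<ge> 3" unfolding N_def by simp
  define s where "s = sqrt (N^2 + 4)"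
  have s2: "s^2 = N^2 + 4" unfolding s_def by simp
  have sN: "N < s" unfolding s_def by (rule real_less_rsqrt) simp
  have sN2: "s < N + 2" unfolding s_def using N3
    by (intro real_less_lsqrt) (auto simp: power2_eq_square algebra_simps)
  define \<alpha> where "\<alpha> = (N + s) / 2"
  have a1: "N < \<alpha>" "\<alpha> < N + 1" unfolding \<alpha>_def using sN sN2 by auto
  have apos: "\<alpha> > 0" using a1 N3 by simp
  have aroot: "\<alpha>^2 - N * \<alpha> - 1 = 0"
    unfolding \<alpha>_def using s2 by (simp add: power2_eq_square field_simps)
  define \<beta> where "\<beta> = - 1 / \<alpha>"
  have broot: "\<beta>^2 - N * \<beta> - 1 = 0"
  proof -
    have "\<beta>^2 - N * \<beta> - 1 = (1 + N * \<alpha> - \<alpha>^2) / \<alpha>^2"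
      unfolding \<beta>_def using apos by (simp add: field_simps power2_eq_square)
    thus ?thesis using aroot by simp
  qed
  have b1: "\<beta> < - 1 / (N + 1)" "- 1 / N < \<beta>"
    unfolding \<beta>_def using a1 apos N3 by (auto simp: field_simps)
  have bneg: "\<beta> < 0" unfolding \<beta>_def using apos by simp
  define Q :: "real poly" where "Q = [:-1, -N, 1:]"
  have pQ: "poly Q x = x^2 - N * x - 1" for x unfolding Q_def by (simp add: power2_eq_square algebra_simps)
  have NI: "N \<in> \<int>" unfolding N_def by simp
  define P' where "P' = P * Q"
  define \<rho>' where "\<rho>' a = (if a < n then \<rho> a else if a = n then \<alpha> else \<beta>)" for a
  from I have dP: "degree P = n" and lP: "lead_coeff P = 1" and cP: "\<forall>t. coeff P t \<in> \<int>"
    and c0: "coeff P 0 = 1 \<or> coeff P 0 = -1" and inj: "inj_on \<rho> {..<n}"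
    and R: "\<forall>a<n. poly P (\<rho> a) = 0 \<and> \<rho> a < 3 * real j + 2 \<and>
        \<not> (- 1 / (3 * real j + 3) \<le> \<rho> a \<and> \<rho> a \<le> 0) \<and> \<bar>\<rho> a\<bar> \<noteq> 1"
    unfolding Inv_def by auto
  have P0: "P \<noteq> 0" using lP by auto
  have Q0: "Q \<noteq> 0" "degree Q = 2" "lead_coeff Q = 1" unfolding Q_def by auto
  have NN: "N = 3 * real j + 3" unfolding N_def by simp
  have "Inv (Suc j) (n + 2) P' \<rho>'"
    unfolding Inv_def
  proof (intro conjI allI impI)
    show "degree P' = n + 2" unfolding P'_def using P0 Q0 dP by (simp add: degree_mult_eq)
    show "lead_coeff P' = 1" unfolding P'_def using lP Q0 by (simp add: lead_coeff_mult)
    show "coeff P' t \<in> \<int>" for t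
      using coeff_mult_Ints[OF cP, of Q] NI unfolding P'_def Q_def
      by (auto simp: coeff_pCons split: nat.splits)
    show "coeff P' 0 = 1 \<or> coeff P' 0 = -1" unfolding P'_def Q_def using c0 by (auto simp: coeff_mult_0)
    show "inj_on \<rho>' {..<n + 2}"
    proof (rule inj_onI)
      fix x y assume x: "x \<in> {..<n+2}" and y: "y \<in> {..<n+2}" and e: "\<rho>' x = \<rho>' y"
      have old: "\<rho> a < N - 1" "\<not> (- 1 / N \<le> \<rho> a \<and> \<rho> a \<le> 0)" if "a < n" for a
        using R that NN by auto
      have rng: "\<rho>' a < 0 \<and> - 1 / N < \<rho>' a \<longleftrightarrow> a = n + 1" if "a < n + 2" for a
        using that old[of a] a1 b1 bneg apos unfolding \<rho>'_def by (auto split: if_splits)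
      have big: "\<rho>' a > N - 1 \<longleftrightarrow> a = n" if "a < n + 2" for a
        using that old[of a] a1 b1 bneg N3 unfolding \<rho>'_def by (auto split: if_splits)
      show "x = y"
      proof (cases "x < n \<and> y < n")
        case True
        thus ?thesis using e inj unfolding \<rho>'_def by (auto dest: inj_onD)
      next
        case False
        have xx: "x < n + 2" and yy: "y < n + 2" using x y by auto
        have "x = n \<or> x = n + 1 \<or> y = n \<or> y = n + 1" using False xx yy by auto
        show ?thesis
        proof (cases "x = n + 1 \<or> y = n + 1")
          case True thus ?thesis using rng[OF xx] rng[OF yy] e by auto
        next
          case False
          hence "x = n \<or> y = n" using \<open>x = n \<or> x = n + 1 \<or> y = n \<or> y = n + 1\<close> by auto
          thus ?thesis using big[OF xx] big[OF yy] e by auto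
        qed
      qed
    qed
    fix a assume a: "a < n + 2"
    show "poly P' (\<rho>' a) = 0"
      unfolding P'_def \<rho>'_def using R a aroot broot by (auto simp: pQ)
    have old: "\<rho> a < N - 1" "\<not> (- 1 / N \<le> \<rho> a \<and> \<rho> a \<le> 0)" "\<bar>\<rho> a\<bar> \<noteq> 1" if "a < n"
      using R that NN by auto
    have fr: "- 1 / (3 * real (Suc j) + 3) = - 1 / (N + 3)" using NN by simp
    have ineq1: "- 1 / N < - 1 / (N + 3)" using N3 by (simp add: field_simps)
    have ineq2: "- 1 / (N + 1) < - 1 / (N + 3)" using N3 by (simp add: field_simps)
    have bsmall: "\<bar>\<beta>\<bar> < 1"
    proof -
      have "- 1 / N \<ge> - 1" using N3 by (simp add: field_simps)
      moreover have "- 1 / (N+1) < 0" using N3 by (simp add: field_simps)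
      ultimately show ?thesis using b1 bneg by (simp add: abs_if)
    qed
    show "\<rho>' a < 3 * real (Suc j) + 2"
      using old(1) a1 bneg N3 NN unfolding \<rho>'_def
      by (auto split: if_splits)
    show "\<not> (- 1 / (3 * real (Suc j) + 3) \<le> \<rho>' a \<and> \<rho>' a \<le> 0)"
      unfolding fr \<rho>'_def using old(2) a1 apos b1 ineq1 ineq2 a
      by (auto split: if_splits)
    show "\<bar>\<rho>' a\<bar> \<noteq> 1"
      unfolding \<rho>'_def using old(3) a1 N3 bsmall by (auto split: if_splits)
  qed
  thus ?thesis by blast
qed

lemma Inv_iter: "Inv j n P \<rho> \<Longrightarrow> \<exists>P' \<rho>'. Inv (j + s) (n + 2 * s) P' \<rho>'"
proof (induction s)
  case 0 thus ?case by auto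
next
  case (Suc s)
  then obtain P' \<rho>' where "Inv (j + s) (n + 2 * s) P' \<rho>'" by blast
  from Inv_step[OF this] show ?case by (simp add: add.assoc)
qed

lemma Inv_base0: "Inv 0 0 1 \<rho>"
  unfolding Inv_def by (auto simp: coeff_1 )

lemma ivt_root:
  fixes a b :: real and f :: "real \<Rightarrow> real"
  assumes ab: "a < b" and fa: "f a < 0" and fb: "0 < f b" and c: "continuous_on {a..b} f"
  shows "\<exists>x. a < x \<and> x < b \<and> f x = 0"
proof -
  obtain x where x: "a \<le> x" "x \<le> b" "f x = 0" using IVT'[of f a 0 b] ab fa fb c by force
  thus ?thesis using fa fb by (intro exI[of _ x]) (auto simp: order_le_less)
qed

lemma Inv_base3: "\<exists>P \<rho>. Inv 0 3 P \<rho>"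
proof -
  define f where "f x = x^3 - 3 * x - 1" for x :: real
  have c: "continuous_on S f" for S unfolding f_def by (intro continuous_intros)
  have cm: "continuous_on S (\<lambda>x. - f x)" for S unfolding f_def by (intro continuous_intros)
  obtain r1 where r1: "-2 < r1" "r1 < -3/2" "f r1 = 0"
    using ivt_root[of "-2" "-3/2" f] c unfolding f_def by (auto simp: power3_eq_cube)
  obtain r2 where r2: "-1/2 < r2" "r2 < -1/3" "f r2 = 0"
    using ivt_root[of "-1/2" "-1/3" "\<lambda>x. - f x"] cm unfolding f_def by (auto simp: power3_eq_cube)
  obtain r3 where r3: "1 < r3" "r3 < 2" "f r3 = 0"
    using ivt_root[of "1" "2" f] c unfolding f_def by (auto simp: power3_eq_cube)
  define P :: "real poly" where "P = [:-1, -3, 0, 1:]"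
  define \<rho> where "\<rho> a = (if a = 0 then r1 else if a = 1 then r2 else r3)" for a :: nat
  have pP: "poly P x = f x" for x unfolding P_def f_def by (simp add: power3_eq_cube algebra_simps)
  have "Inv 0 3 P \<rho>"
    unfolding Inv_def
  proof (intro conjI allI impI)
    show "degree P = 3" unfolding P_def by simp
    show "lead_coeff P = 1" unfolding P_def by simp
    show "coeff P t \<in> \<int>" for t unfolding P_def by (auto simp: coeff_pCons split: nat.splits)
    show "coeff P 0 = 1 \<or> coeff P 0 = -1" unfolding P_def by simp
    show "inj_on \<rho> {..<3}"
      unfolding \<rho>_def using r1 r2 r3 by (auto intro!: inj_onI split: if_splits)
    fix a :: nat assume a: "a < 3"
    hence a3: "a = 0 \<or> a = 1 \<or> a = 2" by auto
    show "poly P (\<rho> a) = 0" using a3 r1 r2 r3 unfolding \<rho>_def pP by auto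
    show "\<rho> a < 3 * real 0 + 2" using a3 r1 r2 r3 unfolding \<rho>_def by auto
    show "\<not> (- 1 / (3 * real 0 + 3) \<le> \<rho> a \<and> \<rho> a \<le> 0)" using a3 r1 r2 r3 unfolding \<rho>_def by auto
    show "\<bar>\<rho> a\<bar> \<noteq> 1" using a3 r1 r2 r3 unfolding \<rho>_def by auto
  qed
  thus ?thesis by blast
qed

lemma roots_exist:
  assumes m2: "m \<ge> (2::nat)"
  shows "\<exists>(pc::nat \<Rightarrow> int) (\<rho>::nat \<Rightarrow> real). inj_on \<rho> {..<m} \<and>
    (\<forall>a<m. \<rho> a ^ m + (\<Sum>t<m. of_int (pc t) * \<rho> a ^ t) = 0) \<and>
    (pc 0 = 1 \<or> pc 0 = -1) \<and> (\<forall>a<m. \<bar>\<rho> a\<bar> \<noteq> 1)"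
proof -
  have "\<exists>j P \<rho>. Inv j m P \<rho>"
  proof (cases "even m")
    case True
    then obtain s where "m = 2 * s" by auto
    thus ?thesis using Inv_iter[OF Inv_base0, of s] by auto
  next
    case False
    then obtain s where s: "m = 2 * s + 1" using oddE by blast
    with m2 have "s \<ge> 1" by simp
    hence "m = 3 + 2 * (s - 1)" using s by simp
    moreover obtain P \<rho> where "Inv 0 3 P \<rho>" using Inv_base3 by blast
    ultimately show ?thesis using Inv_iter[of 0 3 P \<rho> "s - 1"] by auto
  qed
  then obtain j P \<rho> where I: "Inv j m P \<rho>" by blast
  hence dP: "degree P = m" and lP: "lead_coeff P = 1" and cP: "\<forall>t. coeff P t \<in> \<int>"
    and c0: "coeff P 0 = 1 \<or> coeff P 0 = -1" and inj: "inj_on \<rho> {..<m}"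
    and R: "\<forall>a<m. poly P (\<rho> a) = 0 \<and> \<bar>\<rho> a\<bar> \<noteq> 1"
    unfolding Inv_def by auto
  define pc where "pc t = (SOME z::int. coeff P t = of_int z)" for t
  have pc: "of_int (pc t) = coeff P t" for t
  proof -
    from cP obtain z :: int where "coeff P t = of_int z" by (metis Ints_cases)
    thus ?thesis unfolding pc_def by (metis (mono_tags, lifting) someI_ex)
  qed
  show ?thesis
  proof (intro exI conjI allI impI)
    show "inj_on \<rho> {..<m}" by (rule inj)
    fix a assume a: "a < m"
    have "poly P (\<rho> a) = (\<Sum>t\<le>m. coeff P t * \<rho> a ^ t)" using poly_altdef[of P] dP by simp
    also have "\<dots> = \<rho> a ^ m + (\<Sum>t<m. of_int (pc t) * \<rho> a ^ t)"
      using lP dP by (simp add: lessThan_Suc_atMost[symmetric] pc)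
    finally show "\<rho> a ^ m + (\<Sum>t<m. of_int (pc t) * \<rho> a ^ t) = 0" using R a by simp
    show "\<bar>\<rho> a\<bar> \<noteq> 1" using R a by simp
  next
    show "pc 0 = 1 \<or> pc 0 = -1" using c0 pc[of 0] by auto
  qed
qed




locale rdata =
  fixes m :: nat and \<rho> :: "nat \<Rightarrow> real" and pc :: "nat \<Rightarrow> int"
  assumes m2: "m \<ge> 2"
    and root: "\<forall>a<m. \<rho> a ^ m + (\<Sum>t<m. of_int (pc t) * \<rho> a ^ t) = 0"
    and pc0: "pc 0 = 1 \<or> pc 0 = -1"
begin

definition Zs :: "(nat \<Rightarrow> real) set" where
  "Zs = {h. \<exists>c::nat \<Rightarrow> int. \<forall>a<m. h a = (\<Sum>t<m. of_int (c t) * \<rho> a ^ t)}"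

lemma Z_zero: "(\<lambda>a. 0) \<in> Zs"
  unfolding Zs_def by (intro CollectI exI[of _ "\<lambda>_. 0"]) simp

lemma Z_add: "h \<in> Zs \<Longrightarrow> h' \<in> Zs \<Longrightarrow> (\<lambda>a. h a + h' a) \<in> Zs"
  unfolding Zs_def
proof (elim CollectE exE, intro CollectI)
  fix c c' assume c: "\<forall>a<m. h a = (\<Sum>t<m. of_int (c t) * \<rho> a ^ t)"
    and c': "\<forall>a<m. h' a = (\<Sum>t<m. of_int (c' t) * \<rho> a ^ t)"
  show "\<exists>c''::nat\<Rightarrow>int. \<forall>a<m. h a + h' a = (\<Sum>t<m. of_int (c'' t) * \<rho> a ^ t)"
    by (rule exI[of _ "\<lambda>t. c t + c' t"]) (simp add: c c' sum.distrib distrib_right)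
qed

lemma Z_scale: "h \<in> Zs \<Longrightarrow> (\<lambda>a. of_int z * h a) \<in> Zs"
  unfolding Zs_def
proof (elim CollectE exE, intro CollectI)
  fix c assume c: "\<forall>a<m. h a = (\<Sum>t<m. of_int (c t) * \<rho> a ^ t)"
  show "\<exists>c''::nat\<Rightarrow>int. \<forall>a<m. of_int z * h a = (\<Sum>t<m. of_int (c'' t) * \<rho> a ^ t)"
    by (rule exI[of _ "\<lambda>t. z * c t"]) (simp add: c sum_distrib_left mult.assoc)
qed

lemma Z_sum: "finite S \<Longrightarrow> (\<And>x. x \<in> S \<Longrightarrow> f x \<in> Zs) \<Longrightarrow> (\<lambda>a. \<Sum>x\<in>S. f x a) \<in> Zs"
proof (induction S rule: finite_induct)
  case empty thus ?case using Z_zero by simp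
next
  case (insert x F)
  have "(\<lambda>a. f x a + (\<Sum>x\<in>F. f x a)) \<in> Zs" using insert by (intro Z_add) auto
  thus ?case using insert by simp
qed

lemma Z_pow_lt: "t < m \<Longrightarrow> (\<lambda>a. \<rho> a ^ t) \<in> Zs"
  unfolding Zs_def
proof (intro CollectI exI[of _ "\<lambda>s. if s = t then 1 else 0"] allI impI)
  fix a assume "t < m" "a < m"
  have "(\<Sum>s<m. of_int (if s = t then 1 else 0) * \<rho> a ^ s) = (\<Sum>s<m. if s = t then \<rho> a ^ s else 0)"
    by (rule sum.cong) auto
  also have "\<dots> = \<rho> a ^ t" using \<open>t < m\<close> by simp
  finally show "\<rho> a ^ t = (\<Sum>s<m. of_int (if s = t then 1 else 0) * \<rho> a ^ s)" by simp
qed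

lemma Z_pow_m: "(\<lambda>a. \<rho> a ^ m) \<in> Zs"
proof -
  have "(\<lambda>a. of_int (-1) * (\<Sum>t<m. of_int (pc t) * \<rho> a ^ t)) \<in> Zs"
    by (intro Z_scale Z_sum Z_pow_lt) (auto intro: Z_scale[of "\<lambda>a. \<rho> a ^ _", simplified] Z_pow_lt)
  moreover have "\<forall>a<m. \<rho> a ^ m = of_int (-1) * (\<Sum>t<m. of_int (pc t) * \<rho> a ^ t)"
    using root by (auto simp: add_eq_0_iff)
  ultimately show ?thesis unfolding Zs_def by (auto)
qed

lemma Z_cong: "h \<in> Zs \<Longrightarrow> (\<And>a. a < m \<Longrightarrow> h a = h' a) \<Longrightarrow> h' \<in> Zs"
  unfolding Zs_def by auto

lemma Z_mulrho: "h \<in> Zs \<Longrightarrow> (\<lambda>a. \<rho> a * h a) \<in> Zs"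
proof -
  assume "h \<in> Zs"
  then obtain c where c: "\<forall>a<m. h a = (\<Sum>t<m. of_int (c t) * \<rho> a ^ t)" unfolding Zs_def by auto
  have pw: "(\<lambda>a. \<rho> a ^ Suc t) \<in> Zs" if "t < m" for t
  proof (cases "Suc t < m")
    case True thus ?thesis by (rule Z_pow_lt)
  next
    case False hence "Suc t = m" using that by simp
    thus ?thesis using Z_pow_m by simp
  qed
  have "(\<lambda>a. \<Sum>t<m. of_int (c t) * \<rho> a ^ Suc t) \<in> Zs"
    by (rule Z_sum, simp, rule Z_scale, rule pw, simp)
  thus ?thesis by (rule Z_cong) (simp add: c sum_distrib_left mult_ac)
qed

lemma Z_pow: "(\<lambda>a. \<rho> a ^ n) \<in> Zs"
proof (induction n)
  case 0 thus ?case using Z_pow_lt[of 0] m2 by simp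
next
  case (Suc n) thus ?case using Z_mulrho[OF Suc] by simp
qed

lemma Z_mult: "h \<in> Zs \<Longrightarrow> h' \<in> Zs \<Longrightarrow> (\<lambda>a. h a * h' a) \<in> Zs"
proof -
  assume "h \<in> Zs" "h' \<in> Zs"
  then obtain c c' where c: "\<forall>a<m. h a = (\<Sum>t<m. of_int (c t) * \<rho> a ^ t)"
    and c': "\<forall>a<m. h' a = (\<Sum>t<m. of_int (c' t) * \<rho> a ^ t)" unfolding Zs_def by auto
  have "(\<lambda>a. \<Sum>t<m. \<Sum>s<m. of_int (c t * c' s) * \<rho> a ^ (t + s)) \<in> Zs"
    by (intro Z_sum Z_scale Z_pow) auto
  thus ?thesis
  proof (rule Z_cong)
    fix a assume a: "a < m"
    have "h a * h' a = (\<Sum>t<m. \<Sum>s<m. of_int (c t) * \<rho> a ^ t * (of_int (c' s) * \<rho> a ^ s))"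
      by (simp only: c[rule_format, OF a] c'[rule_format, OF a] sum_product)
    thus "(\<Sum>t<m. \<Sum>s<m. of_int (c t * c' s) * \<rho> a ^ (t + s)) = h a * h' a"
      by (simp add: power_add mult_ac)
  qed
qed

lemma rho_nz: "a < m \<Longrightarrow> \<rho> a \<noteq> 0"
proof
  assume a: "a < m" and z: "\<rho> a = 0"
  have "(\<Sum>t<m. of_int (pc t) * \<rho> a ^ t) = (of_int (pc 0) :: real)"
    using m2 z by (subst sum.remove[of _ 0]) (auto simp: zero_power)
  thus False using root a z m2 pc0 by (auto simp: zero_power)
qed

lemma Z_inv: "(\<lambda>a. inverse (\<rho> a)) \<in> Zs"
proof -
  define e where "e = pc 0"
  have ee: "(of_int e :: real) * of_int e = 1" using pc0 unfolding e_def by auto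
  define X where "X a = \<rho> a ^ (m - 1) + (\<Sum>t<m-1. of_int (pc (Suc t)) * \<rho> a ^ t)" for a
  have XZ: "X \<in> Zs" unfolding X_def by (intro Z_add Z_pow Z_sum Z_scale) auto
  have eq: "\<rho> a * X a = - of_int e" if a: "a < m" for a
  proof -
    have mm: "m = Suc (m - 1)" using m2 by simp
    have "(\<Sum>t<m. of_int (pc t) * \<rho> a ^ t) = of_int e + (\<Sum>t<m-1. of_int (pc (Suc t)) * \<rho> a ^ Suc t)"
      unfolding e_def by (subst mm, subst sum.lessThan_Suc_shift) simp
    moreover have "\<rho> a ^ m = \<rho> a * \<rho> a ^ (m - 1)" by (subst mm) simp
    moreover have "\<rho> a * X a = \<rho> a ^ m + (\<Sum>t<m-1. of_int (pc (Suc t)) * \<rho> a ^ Suc t)"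
      unfolding X_def using \<open>\<rho> a ^ m = \<rho> a * \<rho> a ^ (m - 1)\<close>
      by (simp add: distrib_left sum_distrib_left mult_ac)
    ultimately show ?thesis using root a by auto
  qed
  have "(\<lambda>a. of_int (- e) * X a) \<in> Zs" by (rule Z_scale[OF XZ])
  thus ?thesis
  proof (rule Z_cong)
    fix a assume a: "a < m"
    have "\<rho> a * (of_int (- e) * X a) = 1" using eq[OF a] ee by (simp add: mult_ac)
    thus "of_int (- e) * X a = inverse (\<rho> a)" using rho_nz[OF a] by (simp add: field_simps)
  qed
qed

lemma Z_invpow: "(\<lambda>a. inverse (\<rho> a) ^ n) \<in> Zs"
proof (induction n)
  case 0 thus ?case using Z_pow[of 0] by simp
next
  case (Suc n) thus ?case using Z_mult[OF Z_inv Suc] by simp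
qed

lemma Z_coords: "h \<in> Zs \<Longrightarrow> \<exists>c::nat\<Rightarrow>int. \<forall>a<m. (\<Sum>t'<m. of_int (c t') * \<rho> a ^ t') = h a"
  unfolding Zs_def by auto

lemma K_exist: "\<exists>K::nat\<Rightarrow>nat\<Rightarrow>nat\<Rightarrow>int. \<forall>g t. \<forall>a<m.
   (\<Sum>t'<m. of_int (K g t t') * \<rho> a ^ t') = \<rho> a ^ (g + t)"
proof -
  define K where "K g t = (SOME c::nat\<Rightarrow>int. \<forall>a<m. (\<Sum>t'<m. of_int (c t') * \<rho> a ^ t') = \<rho> a ^ (g + t))" for g t
  have H: "\<forall>a<m. (\<Sum>t'<m. of_int (K g t t') * \<rho> a ^ t') = \<rho> a ^ (g + t)" for g t
    using someI_ex[OF Z_coords[OF Z_pow[of "g+t"]]] unfolding K_def by simp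
  hence "\<forall>g t. \<forall>a<m. (\<Sum>t'<m. of_int (K g t t') * \<rho> a ^ t') = \<rho> a ^ (g + t)" by blast
  thus ?thesis by blast
qed

lemma K'_exist: "\<exists>K::nat\<Rightarrow>nat\<Rightarrow>nat\<Rightarrow>int. \<forall>g t. \<forall>a<m.
   (\<Sum>t'<m. of_int (K g t t') * \<rho> a ^ t') = \<rho> a ^ t * inverse (\<rho> a) ^ g"
proof -
  define K where "K g t = (SOME c::nat\<Rightarrow>int. \<forall>a<m. (\<Sum>t'<m. of_int (c t') * \<rho> a ^ t') = \<rho> a ^ t * inverse (\<rho> a) ^ g)" for g t
  have H: "\<forall>a<m. (\<Sum>t'<m. of_int (K g t t') * \<rho> a ^ t') = \<rho> a ^ t * inverse (\<rho> a) ^ g" for g t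
    using someI_ex[OF Z_coords[OF Z_mult[OF Z_pow[of t] Z_invpow[of g]]]] unfolding K_def by simp
  hence "\<forall>g t. \<forall>a<m. (\<Sum>t'<m. of_int (K g t t') * \<rho> a ^ t') = \<rho> a ^ t * inverse (\<rho> a) ^ g" by blast
  thus ?thesis by blast
qed

end




lemma sum_split:
  fixes f :: "nat \<Rightarrow> 'a::comm_monoid_add"
  shows "(\<Sum>n<A*B. f n) = (\<Sum>i<A. \<Sum>t<B. f (i*B+t))"
proof -
  have "(\<Sum>n<A*B. f n) = (\<Sum>i<A. sum f {i*B..<i*B+B})"
    using sum.nat_group[of f B A] by simp
  also have "\<dots> = (\<Sum>i<A. \<Sum>t<B. f (i*B+t))"
  proof (rule sum.cong[OF refl])
    fix i
    have "sum f {i*B..<i*B+B} = sum f {0 + i*B..<B + i*B}" by (simp add: add.commute)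
    also have "\<dots> = (\<Sum>t\<in>{0..<B}. f (t + i*B))" by (rule sum.shift_bounds_nat_ivl)
    finally show "sum f {i*B..<i*B+B} = (\<Sum>t<B. f (i*B+t))"
      by (simp add: atLeast0LessThan add.commute)
  qed
  finally show ?thesis .
qed

lemma divmod_idx: "t < (B::nat) \<Longrightarrow> (i * B + t) div B = i" "t < B \<Longrightarrow> (i * B + t) mod B = t"
  by auto

lemma idx_lt: "i < A \<Longrightarrow> t < B \<Longrightarrow> i * B + t < A * (B::nat)"
proof -
  assume "i < A" "t < B"
  hence "i * B + t < i * B + B" by simp
  also have "\<dots> = Suc i * B" by simp
  also have "\<dots> \<le> A * B" using \<open>i < A\<close> by (intro mult_right_mono) auto
  finally show ?thesis .
qed

lemma mult_if0: "(if P then (a::'a::mult_zero) else 0) * b = (if P then a * b else 0)" by simp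
lemma mult_if0': "b * (if P then (a::'a::mult_zero) else 0) = (if P then b * a else 0)" by simp





lemma extract_basis:
  fixes u :: "'i \<Rightarrow> nat \<Rightarrow> 'a::field"
  assumes "finite I"
  shows "\<exists>J\<subseteq>I. (\<forall>c. (\<forall>n. (\<Sum>x\<in>J. c x * u x n) = 0) \<longrightarrow> (\<forall>x\<in>J. c x = 0)) \<and>
           (\<forall>c. \<exists>c'. \<forall>n. (\<Sum>x\<in>I. c x * u x n) = (\<Sum>x\<in>J. c' x * u x n))"
  using assms
proof (induction I rule: finite_psubset_induct)
  case (psubset I)
  show ?case
  proof (cases "\<forall>c. (\<forall>n. (\<Sum>x\<in>I. c x * u x n) = 0) \<longrightarrow> (\<forall>x\<in>I. c x = 0)")
    case True
    thus ?thesis by (intro exI[of _ I]) auto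
  next
    case False
    then obtain c x0 where c: "\<forall>n. (\<Sum>x\<in>I. c x * u x n) = 0" and x0: "x0 \<in> I" "c x0 \<noteq> 0"
      by auto
    define I' where "I' = I - {x0}"
    have sub: "I' \<subset> I" unfolding I'_def using x0 by auto
    obtain J where J: "J \<subseteq> I'" and ind: "\<forall>c. (\<forall>n. (\<Sum>x\<in>J. c x * u x n) = 0) \<longrightarrow> (\<forall>x\<in>J. c x = 0)"
      and sp: "\<forall>c. \<exists>c'. \<forall>n. (\<Sum>x\<in>I'. c x * u x n) = (\<Sum>x\<in>J. c' x * u x n)"
      using psubset.IH[OF sub] by blast
    have fin': "finite I'" using psubset.hyps sub by (auto intro: finite_subset)
    have split: "(\<Sum>x\<in>I. f x) = f x0 + (\<Sum>x\<in>I'. f x)" for f :: "'i \<Rightarrow> 'a"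
      unfolding I'_def using psubset.hyps x0 by (simp add: sum.remove)
    have ux0: "u x0 n = - (\<Sum>x\<in>I'. (c x / c x0) * u x n)" for n
    proof -
      have "(\<Sum>x\<in>I. c x * u x n) = c x0 * u x0 n + (\<Sum>x\<in>I'. c x * u x n)" by (rule split)
      hence "c x0 * u x0 n + (\<Sum>x\<in>I'. c x * u x n) = 0" using c by simp
      hence "c x0 * u x0 n = - (\<Sum>x\<in>I'. c x * u x n)" by (simp add: eq_neg_iff_add_eq_0)
      hence "u x0 n = - (\<Sum>x\<in>I'. c x * u x n) / c x0" using x0 by (simp add: field_simps)
      thus ?thesis by (simp add: sum_divide_distrib)
    qed
    show ?thesis
    proof (rule exI[of _ J], intro conjI)
      show "J \<subseteq> I" using J sub by auto
      show "\<forall>c. (\<forall>n. (\<Sum>x\<in>J. c x * u x n) = 0) \<longrightarrow> (\<forall>x\<in>J. c x = 0)" by (rule ind)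
      show "\<forall>c. \<exists>c'. \<forall>n. (\<Sum>x\<in>I. c x * u x n) = (\<Sum>x\<in>J. c' x * u x n)"
      proof
      fix c1
      obtain c' where c': "\<forall>n. (\<Sum>x\<in>I'. (c1 x - c1 x0 * (c x / c x0)) * u x n) = (\<Sum>x\<in>J. c' x * u x n)"
        using sp[rule_format, of "\<lambda>x. c1 x - c1 x0 * (c x / c x0)"] by blast
      have "\<forall>n. (\<Sum>x\<in>I. c1 x * u x n) = (\<Sum>x\<in>J. c' x * u x n)"
      proof
        fix n
        have "(\<Sum>x\<in>I. c1 x * u x n) = c1 x0 * u x0 n + (\<Sum>x\<in>I'. c1 x * u x n)" by (rule split)
        also have "\<dots> = (\<Sum>x\<in>I'. (c1 x - c1 x0 * (c x / c x0)) * u x n)"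
          unfolding ux0 by (simp add: sum_distrib_left sum_subtractf algebra_simps)
        finally show "(\<Sum>x\<in>I. c1 x * u x n) = (\<Sum>x\<in>J. c' x * u x n)" using c' by simp
      qed
      thus "\<exists>c'. \<forall>n. (\<Sum>x\<in>I. c1 x * u x n) = (\<Sum>x\<in>J. c' x * u x n)" by blast
      qed
    qed
  qed
qed

lemma subsp_lincomb:
  assumes V: "subsp d V" and S: "finite S" and f: "\<forall>x\<in>S. f x \<in> V"
  shows "(\<lambda>n. \<Sum>x\<in>S. a x * f x n) \<in> V"
  using S f
proof (induction S rule: finite_induct)
  case empty thus ?case using V unfolding subsp_def by simp
next
  case (insert x F)
  have "vadd (smul (a x) (f x)) (\<lambda>n. \<Sum>x\<in>F. a x * f x n) \<in> V"
    using V insert unfolding subsp_def by auto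
  thus ?case using insert by (simp add: vadd_def smul_def)
qed

lemma mult_if10: "(if P then (1::'a::semiring_1) else 0) * x = (if P then x else 0)"
  "x * (if P then (1::'a::semiring_1) else 0) = (if P then x else 0)" by simp_all


lemma adapted_basis:
  fixes c :: "nat \<Rightarrow> nat \<Rightarrow> nat \<Rightarrow> rat"
  assumes gr: "graded_sc d c"
  shows "\<exists>D (v::nat\<Rightarrow>nat\<Rightarrow>rat) (g::nat\<Rightarrow>nat) (W::nat\<Rightarrow>nat\<Rightarrow>rat).
    (\<forall>i<D. v i \<in> vecs d \<and> g i \<ge> 1) \<and>
    (\<forall>i<D. \<forall>j<D. (\<Sum>k<d. W i k * v j k) = (if i = j then 1 else 0)) \<and>
    (\<forall>k<d. \<forall>k'<d. (\<Sum>i<D. v i k * W i k') = (if k = k' then 1 else 0)) \<and>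
    (\<forall>i<D. \<forall>j<D. \<forall>l<D. (\<Sum>k<d. W l k * sc_bracket d c (v i) (v j) k) \<noteq> 0 \<longrightarrow> g l = g i + g j)"
proof -
  obtain K :: nat and V :: "nat \<Rightarrow> (nat \<Rightarrow> rat) set" where Vs: "\<forall>i\<in>{1..K}. subsp d (V i)"
    and dec: "\<forall>x\<in>vecs d. \<exists>!w. (\<forall>i. w i \<in> (if i \<in> {1..K} then V i else {\<lambda>_. 0})) \<and> x = vsum w {1..K}"
    and br: "\<forall>i\<in>{1..K}. \<forall>j\<in>{1..K}. \<forall>x\<in>V i. \<forall>y\<in>V j.
        sc_bracket d c x y \<in> (if i + j \<le> K then V (i + j) else {\<lambda>_. 0})"
    using gr unfolding graded_sc_def by blast
  define e where "e k = (\<lambda>n::nat. if n = k then (1::rat) else 0)" for k :: nat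
  have ev: "k < d \<Longrightarrow> e k \<in> vecs d" for k unfolding e_def vecs_def by auto
  have "\<forall>k. \<exists>w. k < d \<longrightarrow> (\<forall>i. w i \<in> (if i \<in> {1..K} then V i else {\<lambda>_. 0})) \<and> e k = vsum w {1..K}"
  proof
    fix k show "\<exists>w. k < d \<longrightarrow> (\<forall>i. w i \<in> (if i \<in> {1..K} then V i else {\<lambda>_. 0})) \<and> e k = vsum w {1..K}"
    proof (cases "k < d")
      case True
      from dec[rule_format, OF ev[OF True]] show ?thesis by blast
    qed auto
  qed
  then obtain vv where vv: "\<And>k. k < d \<Longrightarrow> (\<forall>i. vv k i \<in> (if i \<in> {1..K} then V i else {\<lambda>_. 0})) \<and> e k = vsum (vv k) {1..K}"
    by metis
  define I where "I = {1..K} \<times> {..<d}"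
  define u where "u x = vv (snd x) (fst x)" for x
  have finI: "finite I" unfolding I_def by simp
  have uV: "x \<in> I \<Longrightarrow> u x \<in> V (fst x)" for x
    unfolding I_def u_def using vv[of "snd x"] by (auto split: if_splits)
  have uvecs: "x \<in> I \<Longrightarrow> u x \<in> vecs d" for x
    using uV[of x] Vs unfolding I_def subsp_def by auto
  obtain J where JI: "J \<subseteq> I" and ind: "\<forall>c. (\<forall>n. (\<Sum>x\<in>J. c x * u x n) = 0) \<longrightarrow> (\<forall>x\<in>J. c x = 0)"
      and sp: "\<forall>c. \<exists>c'. \<forall>n. (\<Sum>x\<in>I. c x * u x n) = (\<Sum>x\<in>J. c' x * u x n)"
    using extract_basis[OF finI, of u] by blast
  have finJ: "finite J" using JI finI by (rule finite_subset)
  have eI: "e k n = (\<Sum>x\<in>I. (if snd x = k then 1 else 0) * u x n)" if k: "k < d" for k n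
  proof -
    have "e k n = (\<Sum>p\<in>{1..K}. vv k p n)" using vv[OF k] by (simp add: vsum_def)
    also have "\<dots> = (\<Sum>p\<in>{1..K}. \<Sum>k'<d. (if k' = k then 1 else 0) * vv k' p n)"
      using k by (simp add: mult_if10)
    also have "\<dots> = (\<Sum>x\<in>I. (if snd x = k then 1 else 0) * u x n)"
      unfolding I_def u_def by (simp add: sum.cartesian_product case_prod_beta)
    finally show ?thesis .
  qed
  have "\<forall>k. \<exists>c'. k < d \<longrightarrow> (\<forall>n. e k n = (\<Sum>x\<in>J. c' x * u x n))"
    using sp eI by metis
  then obtain C where C: "\<And>k n. k < d \<Longrightarrow> e k n = (\<Sum>x\<in>J. C k x * u x n)" by metis
  have coord: "y n = (\<Sum>x\<in>J. (\<Sum>k<d. C k x * y k) * u x n)" if y: "y \<in> vecs d" for y n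
  proof -
    have "y n = (\<Sum>k<d. y k * e k n)"
    proof (cases "n < d")
      case True thus ?thesis unfolding e_def by (simp add: mult_if10)
    next
      case False thus ?thesis using y unfolding e_def vecs_def by auto
    qed
    also have "\<dots> = (\<Sum>k<d. \<Sum>x\<in>J. y k * (C k x * u x n))" by (simp add: C sum_distrib_left)
    also have "\<dots> = (\<Sum>x\<in>J. (\<Sum>k<d. C k x * y k) * u x n)"
      by (subst sum.swap) (simp add: sum_distrib_right sum_distrib_left mult_ac)
    finally show ?thesis .
  qed
  obtain h where h: "bij_betw h {0..<card J} J" using ex_bij_betw_nat_finite[OF finJ] by blast
  define D where "D = card J"
  have hD: "bij_betw h {..<D} J" using h unfolding D_def by (simp add: atLeast0LessThan)
  have hJ: "i < D \<Longrightarrow> h i \<in> J" for i using hD by (auto simp: bij_betw_def)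
  have hinj: "i < D \<Longrightarrow> j < D \<Longrightarrow> h i = h j \<Longrightarrow> i = j" for i j
    using hD by (auto simp: bij_betw_def dest: inj_onD)
  define v where "v i = u (h i)" for i
  define g where "g i = fst (h i)" for i
  define W where "W i k = C k (h i)" for i k
  have reidx: "(\<Sum>i<D. f (h i)) = (\<Sum>x\<in>J. f x)" for f :: "_ \<Rightarrow> rat"
    using sum.reindex_bij_betw[OF hD, of f] .
  have support: "(\<Sum>k<d. W l k * y k) = 0"
    if p: "p \<in> {1..K}" and y: "y \<in> V p" and l: "l < D" and gl: "g l \<noteq> p" for p y l
  proof -
    define coef where "coef x = (\<Sum>k<d. C k x * y k)" for x
    have yv: "y \<in> vecs d" using Vs p y unfolding subsp_def by auto
    define w1 where "w1 q = (if q \<in> {1..K} then (\<lambda>n. \<Sum>x\<in>{x\<in>J. fst x = q}. coef x * u x n) else (\<lambda>_. 0))" for q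
    define w2 where "w2 q = (if q = p then y else (\<lambda>_. 0))" for q
    have w1ok: "(\<forall>i. w1 i \<in> (if i \<in> {1..K} then V i else {\<lambda>_. 0})) \<and> y = vsum w1 {1..K}"
    proof
      show "\<forall>i. w1 i \<in> (if i \<in> {1..K} then V i else {\<lambda>_. 0})"
      proof
        fix i show "w1 i \<in> (if i \<in> {1..K} then V i else {\<lambda>_. 0})"
        proof (cases "i \<in> {1..K}")
          case True
          have "(\<lambda>n. \<Sum>x\<in>{x\<in>J. fst x = i}. coef x * u x n) \<in> V i"
            using Vs True finJ JI uV by (intro subsp_lincomb) auto
          thus ?thesis using True unfolding w1_def by simp
        next
          case False
          hence "w1 i = (\<lambda>_. 0)" unfolding w1_def by auto
          thus ?thesis using False by auto
        qed
      qed
      have "fst ` J \<subseteq> {1..K}" using JI unfolding I_def by auto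
      hence H: "vsum w1 {1..K} n = (\<Sum>x\<in>J. coef x * u x n)" for n
        unfolding vsum_def w1_def using finJ by (simp add: sum.group)
      show "y = vsum w1 {1..K}"
      proof
        fix n show "y n = vsum w1 {1..K} n" using coord[OF yv, of n] H[of n] unfolding coef_def by simp
      qed
    qed
    have w2ok: "(\<forall>i. w2 i \<in> (if i \<in> {1..K} then V i else {\<lambda>_. 0})) \<and> y = vsum w2 {1..K}"
    proof
      show "\<forall>i. w2 i \<in> (if i \<in> {1..K} then V i else {\<lambda>_. 0})"
        using Vs y p unfolding w2_def subsp_def by auto
      show "y = vsum w2 {1..K}"
      proof
        fix n
        have "vsum w2 {1..K} n = (\<Sum>i\<in>{1..K}. if i = p then y n else 0)"
          unfolding vsum_def w2_def by (intro sum.cong) auto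
        thus "y n = vsum w2 {1..K} n" using p by simp
      qed
    qed
    have "w1 = w2"
    proof -
      obtain w0 where "\<forall>w. ((\<forall>i. w i \<in> (if i \<in> {1..K} then V i else {\<lambda>_. 0})) \<and> y = vsum w {1..K}) \<longrightarrow> w = w0"
        using dec[rule_format, OF yv] by (elim ex1E) blast
      hence "w1 = w0" "w2 = w0" using w1ok w2ok by blast+
      thus ?thesis by simp
    qed
    hence "w1 (g l) = (\<lambda>_. 0)" using gl unfolding w2_def by simp
    moreover have gK: "g l \<in> {1..K}" using hJ[OF l] JI unfolding g_def I_def by auto
    ultimately have "\<forall>n. (\<Sum>x\<in>{x\<in>J. fst x = g l}. coef x * u x n) = 0"
      unfolding w1_def by (metis (lifting))
    hence "\<forall>n. (\<Sum>x\<in>J. (if fst x = g l then coef x else 0) * u x n) = 0"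
      using finJ by (simp add: sum.inter_filter mult_if0)
    hence "(if fst (h l) = g l then coef (h l) else 0) = 0"
      using ind[rule_format, of "\<lambda>x. if fst x = g l then coef x else 0"] hJ[OF l] by blast
    thus ?thesis unfolding coef_def g_def W_def by simp
  qed
  show ?thesis
  proof (intro exI conjI allI impI)
    fix i assume i: "i < D"
    show "v i \<in> vecs d" using uvecs[of "h i"] hJ[OF i] JI unfolding v_def by auto
    show "g i \<ge> 1" using hJ[OF i] JI unfolding g_def I_def by auto
  next
    fix i j assume i: "i < D" and j: "j < D"
    have vj: "v j \<in> vecs d" using uvecs[of "h j"] hJ[OF j] JI unfolding v_def by auto
    have "\<forall>n. (\<Sum>x\<in>J. ((\<Sum>k<d. C k x * v j k) - (if x = h j then 1 else 0)) * u x n) = 0"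
    proof
      fix n
      have "(\<Sum>x\<in>J. (if x = h j then 1 else 0) * u x n) = v j n"
        using finJ hJ[OF j] unfolding v_def by (simp add: mult_if10)
      thus "(\<Sum>x\<in>J. ((\<Sum>k<d. C k x * v j k) - (if x = h j then 1 else 0)) * u x n) = 0"
        using coord[OF vj, of n] by (simp add: left_diff_distrib sum_subtractf)
    qed
    hence "(\<Sum>k<d. C k (h i) * v j k) - (if h i = h j then 1 else 0) = 0"
      using ind[rule_format, of "\<lambda>x. (\<Sum>k<d. C k x * v j k) - (if x = h j then 1 else 0)"] hJ[OF i] by blast
    thus "(\<Sum>k<d. W i k * v j k) = (if i = j then 1 else 0)"
      using hinj[OF i j] unfolding W_def by (auto split: if_splits)
  next
    fix k k' assume k: "k < d" and k': "k' < d"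
    have "(\<Sum>i<D. v i k * W i k') = (\<Sum>x\<in>J. C k' x * u x k)"
      unfolding v_def W_def using reidx[of "\<lambda>x. u x k * C k' x"] by (simp add: mult_ac)
    also have "\<dots> = e k' k" using C[OF k'] by simp
    finally show "(\<Sum>i<D. v i k * W i k') = (if k = k' then 1 else 0)" unfolding e_def by simp
  next
    fix i j l assume i: "i < D" and j: "j < D" and l: "l < D"
      and nz: "(\<Sum>k<d. W l k * sc_bracket d c (v i) (v j) k) \<noteq> 0"
    have gi: "g i \<in> {1..K}" and gj: "g j \<in> {1..K}"
      using hJ[OF i] hJ[OF j] JI unfolding g_def I_def by auto
    have vi: "v i \<in> V (g i)" and vj: "v j \<in> V (g j)"
      using uV[of "h i"] uV[of "h j"] hJ[OF i] hJ[OF j] JI unfolding v_def g_def by auto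
    have B: "sc_bracket d c (v i) (v j) \<in> (if g i + g j \<le> K then V (g i + g j) else {\<lambda>_. 0})"
      using br gi gj vi vj by blast
    show "g l = g i + g j"
    proof (cases "g i + g j \<le> K")
      case False thus ?thesis using B nz by simp
    next
      case True
      hence "g i + g j \<in> {1..K}" using gi by auto
      thus ?thesis using support[of "g i + g j" "sc_bracket d c (v i) (v j)" l] B True nz l by auto
    qed
  qed
qed





lemma swap_mid:
  fixes w :: "'i \<Rightarrow> 'a::comm_semiring_1"
  shows "(\<Sum>k\<in>A. w k * (\<Sum>i\<in>B. u i k * e i)) = (\<Sum>i\<in>B. (\<Sum>k\<in>A. w k * u i k) * e i)"
proof -
  have "(\<Sum>k\<in>A. w k * (\<Sum>i\<in>B. u i k * e i)) = (\<Sum>k\<in>A. \<Sum>i\<in>B. w k * u i k * e i)"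
    by (simp add: sum_distrib_left mult.assoc)
  also have "\<dots> = (\<Sum>i\<in>B. \<Sum>k\<in>A. w k * u i k * e i)" by (rule sum.swap)
  also have "\<dots> = (\<Sum>i\<in>B. (\<Sum>k\<in>A. w k * u i k) * e i)" by (simp add: sum_distrib_right)
  finally show ?thesis .
qed

lemma swap3: "(\<Sum>j\<in>B. \<Sum>n\<in>C. \<Sum>n'\<in>E. f j n n') = (\<Sum>n\<in>C. \<Sum>n'\<in>E. \<Sum>j\<in>B. (f j n n' :: 'a::comm_monoid_add))"
  by (subst sum.swap) (rule sum.cong[OF refl], rule sum.swap)

lemma swap4: "(\<Sum>i\<in>A. \<Sum>j\<in>B. \<Sum>n\<in>C. \<Sum>n'\<in>E. f i j n n') = (\<Sum>n\<in>C. \<Sum>n'\<in>E. \<Sum>i\<in>A. \<Sum>j\<in>B. (f i j n n' :: 'a::comm_monoid_add))"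
proof -
  have "(\<Sum>i\<in>A. \<Sum>j\<in>B. \<Sum>n\<in>C. \<Sum>n'\<in>E. f i j n n') = (\<Sum>i\<in>A. \<Sum>n\<in>C. \<Sum>n'\<in>E. \<Sum>j\<in>B. f i j n n')"
    by (rule sum.cong[OF refl], rule swap3)
  also have "\<dots> = (\<Sum>n\<in>C. \<Sum>n'\<in>E. \<Sum>i\<in>A. \<Sum>j\<in>B. f i j n n')" by (rule swap3)
  finally show ?thesis .
qed

lemma sc_bracket_bilin:
  fixes C :: "nat \<Rightarrow> nat \<Rightarrow> nat \<Rightarrow> 'a::field"
  assumes "finite S" "finite S'"
  shows "sc_bracket N C (\<lambda>k. \<Sum>n\<in>S. a n * x n k) (\<lambda>k. \<Sum>n'\<in>S'. b n' * y n' k) =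
         (\<lambda>k. \<Sum>n\<in>S. \<Sum>n'\<in>S'. a n * b n' * sc_bracket N C (x n) (y n') k)"
proof
  fix k
  show "sc_bracket N C (\<lambda>k. \<Sum>n\<in>S. a n * x n k) (\<lambda>k. \<Sum>n'\<in>S'. b n' * y n' k) k =
         (\<Sum>n\<in>S. \<Sum>n'\<in>S'. a n * b n' * sc_bracket N C (x n) (y n') k)"
  proof (cases "k < N")
    case True
    have "(\<Sum>i<N. \<Sum>j<N. (\<Sum>n\<in>S. a n * x n i) * (\<Sum>n'\<in>S'. b n' * y n' j) * C i j k) =
          (\<Sum>i<N. \<Sum>j<N. \<Sum>n\<in>S. \<Sum>n'\<in>S'. a n * b n' * (x n i * y n' j * C i j k))"
    proof (intro sum.cong refl)
      fix i j
      have "(\<Sum>n\<in>S. a n * x n i) * (\<Sum>n'\<in>S'. b n' * y n' j) =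
        (\<Sum>n\<in>S. \<Sum>n'\<in>S'. (a n * x n i) * (b n' * y n' j))" by (rule sum_product)
      hence "(\<Sum>n\<in>S. a n * x n i) * (\<Sum>n'\<in>S'. b n' * y n' j) * C i j k =
        (\<Sum>n\<in>S. \<Sum>n'\<in>S'. (a n * x n i) * (b n' * y n' j) * C i j k)" by (simp add: sum_distrib_right)
      thus "(\<Sum>n\<in>S. a n * x n i) * (\<Sum>n'\<in>S'. b n' * y n' j) * C i j k =
        (\<Sum>n\<in>S. \<Sum>n'\<in>S'. a n * b n' * (x n i * y n' j * C i j k))" by (simp add: mult_ac)
    qed
    also have "\<dots> = (\<Sum>n\<in>S. \<Sum>n'\<in>S'. \<Sum>i<N. \<Sum>j<N. a n * b n' * (x n i * y n' j * C i j k))"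
      by (rule swap4)
    finally show ?thesis using True unfolding sc_bracket_def by (simp add: sum_distrib_left)
  next
    case False thus ?thesis unfolding sc_bracket_def by simp
  qed
qed

locale cdata =
  fixes m d D :: nat and c :: "nat \<Rightarrow> nat \<Rightarrow> nat \<Rightarrow> rat" and \<rho> :: "nat \<Rightarrow> real"
    and v :: "nat \<Rightarrow> nat \<Rightarrow> rat" and g :: "nat \<Rightarrow> nat" and W :: "nat \<Rightarrow> nat \<Rightarrow> rat"
    and K K' :: "nat \<Rightarrow> nat \<Rightarrow> nat \<Rightarrow> int" and L :: "nat \<Rightarrow> nat \<Rightarrow> real"
  assumes m0: "m > 0"
   and inj: "inj_on \<rho> {..<m}"
   and rnz: "\<forall>a<m. \<rho> a \<noteq> 0"
   and rne1: "\<forall>a<m. \<bar>\<rho> a\<bar> \<noteq> 1"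
   and Kp: "\<forall>gg t. \<forall>a<m. (\<Sum>t'<m. of_int (K gg t t') * \<rho> a ^ t') = \<rho> a ^ (gg + t)"
   and K'p: "\<forall>gg t. \<forall>a<m. (\<Sum>t'<m. of_int (K' gg t t') * \<rho> a ^ t') = \<rho> a ^ t * inverse (\<rho> a) ^ gg"
   and Lp: "\<forall>a<m. \<forall>a'<m. (\<Sum>t<m. L a t * \<rho> a' ^ t) = (if a = a' then 1 else 0)"
   and vv: "\<forall>i<D. v i \<in> vecs d \<and> g i \<ge> 1"
   and WV: "\<forall>i<D. \<forall>j<D. (\<Sum>k<d. W i k * v j k) = (if i = j then 1 else 0)"
   and VW: "\<forall>k<d. \<forall>k'<d. (\<Sum>i<D. v i k * W i k') = (if k = k' then 1 else 0)"
   and grd: "\<forall>i<D. \<forall>j<D. \<forall>l<D. (\<Sum>k<d. W l k * sc_bracket d c (v i) (v j) k) \<noteq> 0 \<longrightarrow> g l = g i + g j"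
begin

definition CR :: "nat \<Rightarrow> nat \<Rightarrow> nat \<Rightarrow> real" where
  "CR p q r = of_rat (dsum_sc m d c p q r)"
definition B :: "(nat \<Rightarrow> real) \<Rightarrow> (nat \<Rightarrow> real) \<Rightarrow> nat \<Rightarrow> real" where
  "B = sc_bracket (m * d) CR"
definition cR :: "nat \<Rightarrow> nat \<Rightarrow> nat \<Rightarrow> real" where
  "cR i j k = of_rat (c i j k)"
definition vR :: "nat \<Rightarrow> nat \<Rightarrow> real" where
  "vR i k = of_rat (v i k)"
definition tens :: "(nat \<Rightarrow> real) \<Rightarrow> (nat \<Rightarrow> real) \<Rightarrow> nat \<Rightarrow> real" where
  "tens y h = (\<lambda>n. if n < m * d then y (n mod d) * h (n div d) else 0)"

lemma tens_vecs: "tens y h \<in> vecs (m * d)"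
  unfolding tens_def vecs_def by auto

lemma tens_idx: "a < m \<Longrightarrow> k < d \<Longrightarrow> tens y h (a * d + k) = y k * h a"
  unfolding tens_def using idx_lt[of a m k d] by (simp add: divmod_idx)

lemma CR_idx: "a < m \<Longrightarrow> k < d \<Longrightarrow> a' < m \<Longrightarrow> k' < d \<Longrightarrow>
   CR (a * d + k) (a' * d + k') n = (if a = a' \<and> a' = n div d then cR k k' (n mod d) else 0)"
  unfolding CR_def dsum_sc_def cR_def by (simp add: divmod_idx)

lemma sum_delta2:
  fixes X :: "nat \<Rightarrow> nat \<Rightarrow> 'a::comm_monoid_add"
  assumes "a0 < m"
  shows "(\<Sum>a<m. \<Sum>a'<m. if a = a0 \<and> a' = a0 then X a a' else 0) = X a0 a0"
proof -
  have "(\<Sum>a<m. \<Sum>a'<m. if a = a0 \<and> a' = a0 then X a a' else 0) = (\<Sum>a<m. if a = a0 then X a a0 else 0)"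
    by (rule sum.cong[OF refl]) (use assms in auto)
  thus ?thesis using assms by simp
qed

lemma bracket_tens:
  "B (tens y h) (tens y' h') = tens (sc_bracket d cR y y') (\<lambda>a. h a * h' a)"
proof
  fix n
  show "B (tens y h) (tens y' h') n = tens (sc_bracket d cR y y') (\<lambda>a. h a * h' a) n"
  proof (cases "n < m * d")
    case False thus ?thesis unfolding B_def sc_bracket_def tens_def by simp
  next
    case True
    hence d0: "d > 0" by (cases d) auto
    define a0 where "a0 = n div d"
    define k0 where "k0 = n mod d"
    have a0: "a0 < m" unfolding a0_def using True by (simp add: less_mult_imp_div_less)
    have k0: "k0 < d" unfolding k0_def using d0 by simp
    have "B (tens y h) (tens y' h') n =
      (\<Sum>a<m. \<Sum>k<d. \<Sum>a'<m. \<Sum>k'<d. tens y h (a*d+k) * tens y' h' (a'*d+k') * CR (a*d+k) (a'*d+k') n)"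
      unfolding B_def sc_bracket_def using True by (simp add: sum_split)
    also have "\<dots> = (\<Sum>a<m. \<Sum>k<d. \<Sum>a'<m. \<Sum>k'<d.
        if a = a0 \<and> a' = a0 then y k * h a * (y' k' * h' a') * cR k k' k0 else 0)"
      unfolding a0_def k0_def
      by (intro sum.cong refl) (simp add: tens_idx CR_idx)
    also have "\<dots> = (\<Sum>a<m. \<Sum>a'<m. \<Sum>k<d. \<Sum>k'<d.
        if a = a0 \<and> a' = a0 then y k * h a * (y' k' * h' a') * cR k k' k0 else 0)"
      by (intro sum.cong refl sum.swap)
    also have "\<dots> = (\<Sum>a<m. \<Sum>a'<m. if a = a0 \<and> a' = a0 then
        (\<Sum>k<d. \<Sum>k'<d. y k * h a * (y' k' * h' a') * cR k k' k0) else 0)"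
      by (intro sum.cong refl) auto
    also have "\<dots> = (\<Sum>k<d. \<Sum>k'<d. y k * h a0 * (y' k' * h' a0) * cR k k' k0)"
      by (rule sum_delta2[OF a0])
    also have "\<dots> = tens (sc_bracket d cR y y') (\<lambda>a. h a * h' a) n"
      unfolding tens_def sc_bracket_def using True k0 a0_def k0_def
      by (simp add: sum_distrib_left sum_distrib_right mult_ac)
    finally show ?thesis .
  qed
qed

definition WR :: "nat \<Rightarrow> nat \<Rightarrow> real" where
  "WR i k = of_rat (W i k)"

definition Fg :: "(nat \<Rightarrow> nat \<Rightarrow> real) \<Rightarrow> (nat \<Rightarrow> real) \<Rightarrow> nat \<Rightarrow> real" where
  "Fg s z = (\<lambda>N. if N < m * d then (\<Sum>i<D. vR i (N mod d) * s (N div d) i *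
      (\<Sum>k<d. WR i k * z ((N div d) * d + k))) else 0)"

lemma WV_R: "i < D \<Longrightarrow> j < D \<Longrightarrow> (\<Sum>k<d. WR i k * vR j k) = (if i = j then 1 else 0)"
proof -
  assume "i < D" "j < D"
  hence "(\<Sum>k<d. W i k * v j k) = (if i = j then 1 else 0)" using WV by auto
  hence "of_rat (\<Sum>k<d. W i k * v j k) = (of_rat (if i = j then 1 else 0) :: real)" by simp
  thus ?thesis unfolding WR_def vR_def by (simp add: of_rat_sum of_rat_mult)
qed

lemma VW_R: "k < d \<Longrightarrow> k' < d \<Longrightarrow> (\<Sum>i<D. vR i k * WR i k') = (if k = k' then 1 else 0)"
proof -
  assume "k < d" "k' < d"
  hence "(\<Sum>i<D. v i k * W i k') = (if k = k' then 1 else 0)" using VW by auto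
  hence "of_rat (\<Sum>i<D. v i k * W i k') = (of_rat (if k = k' then 1 else 0) :: real)" by simp
  thus ?thesis unfolding WR_def vR_def by (simp add: of_rat_sum of_rat_mult)
qed

lemma Fg_vecs: "Fg s z \<in> vecs (m * d)"
  unfolding Fg_def vecs_def by auto

lemma Fg_lin: "Fg s (\<lambda>k. \<Sum>n\<in>S. a n * x n k) = (\<lambda>k. \<Sum>n\<in>S. a n * Fg s (x n) k)"
proof
  fix N
  show "Fg s (\<lambda>k. \<Sum>n\<in>S. a n * x n k) N = (\<Sum>n\<in>S. a n * Fg s (x n) N)"
  proof (cases "N < m * d")
    case False thus ?thesis unfolding Fg_def by simp
  next
    case True
    define q where "q k = N div d * d + k" for k
    have "Fg s (\<lambda>k. \<Sum>n\<in>S. a n * x n k) N =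
        (\<Sum>i<D. vR i (N mod d) * s (N div d) i * (\<Sum>k<d. WR i k * (\<Sum>n\<in>S. x n (q k) * a n)))"
      unfolding Fg_def q_def using True by (simp add: mult.commute)
    also have "\<dots> = (\<Sum>i<D. vR i (N mod d) * s (N div d) i * (\<Sum>n\<in>S. (\<Sum>k<d. WR i k * x n (q k)) * a n))"
      by (simp only: swap_mid)
    also have "\<dots> = (\<Sum>n\<in>S. (\<Sum>i<D. vR i (N mod d) * s (N div d) i * (\<Sum>k<d. WR i k * x n (q k))) * a n)"
      by (simp only: swap_mid)
    also have "\<dots> = (\<Sum>n\<in>S. a n * Fg s (x n) N)"
      unfolding Fg_def q_def using True by (simp add: mult.commute)
    finally show ?thesis .
  qed
qed

lemma Fg_add: "Fg s (vadd x y) = vadd (Fg s x) (Fg s y)"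
  unfolding Fg_def vadd_def by (rule ext) (simp add: sum.distrib distrib_left)

lemma Fg_smul: "Fg s (smul q x) = smul q (Fg s x)"
  unfolding Fg_def smul_def by (rule ext) (simp add: sum_distrib_left mult_ac)

lemma Fg_tens_gen:
  assumes G: "\<forall>i<D. (\<Sum>k<d. WR i k * y k) \<noteq> 0 \<longrightarrow> s' i = \<sigma>"
    and y: "\<forall>k\<ge>d. y k = 0"
    and s: "\<forall>a<m. \<forall>i<D. s a i = f a (s' i)"
  shows "Fg s (tens y h) = tens y (\<lambda>a. f a \<sigma> * h a)"
proof
  fix N
  show "Fg s (tens y h) N = tens y (\<lambda>a. f a \<sigma> * h a) N"
  proof (cases "N < m * d")
    case False thus ?thesis unfolding Fg_def tens_def by simp
  next
    case True
    hence d0: "d > 0" by (cases d) auto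
    define a where "a = N div d"
    have a: "a < m" unfolding a_def using True by (simp add: less_mult_imp_div_less)
    have k0: "N mod d < d" using d0 by simp
    have "Fg s (tens y h) N = (\<Sum>i<D. vR i (N mod d) * s a i * (\<Sum>k<d. WR i k * tens y h (a * d + k)))"
      unfolding Fg_def a_def using True by simp
    also have "\<dots> = (\<Sum>i<D. vR i (N mod d) * s a i * (\<Sum>k<d. WR i k * (y k * h a)))"
      by (intro sum.cong refl arg_cong2[where f = "(*)"]) (auto simp: tens_idx[OF a])
    also have "\<dots> = (\<Sum>i<D. vR i (N mod d) * (f a \<sigma> * h a) * (\<Sum>k<d. WR i k * y k))"
    proof (rule sum.cong[OF refl])
      fix i assume i: "i \<in> {..<D}"
      have E: "(\<Sum>k<d. WR i k * (y k * h a)) = (\<Sum>k<d. WR i k * y k) * h a"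
        by (simp add: sum_distrib_right mult.assoc)
      show "vR i (N mod d) * s a i * (\<Sum>k<d. WR i k * (y k * h a)) =
            vR i (N mod d) * (f a \<sigma> * h a) * (\<Sum>k<d. WR i k * y k)"
      proof (cases "(\<Sum>k<d. WR i k * y k) = 0")
        case True
        thus ?thesis by (simp add: E)
      next
        case False
        hence "s a i = f a \<sigma>" using G s a i by auto
        thus ?thesis unfolding E by (simp add: mult_ac)
      qed
    qed
    also have "\<dots> = (\<Sum>i<D. (f a \<sigma> * h a) * (vR i (N mod d) * (\<Sum>k<d. WR i k * y k)))"
      by (intro sum.cong refl) (simp add: mult_ac)
    also have "\<dots> = f a \<sigma> * h a * (\<Sum>i<D. vR i (N mod d) * (\<Sum>k<d. WR i k * y k))"
      by (simp only: sum_distrib_left)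
    also have "\<dots> = f a \<sigma> * h a * (\<Sum>k<d. (\<Sum>i<D. vR i (N mod d) * WR i k) * y k)"
      by (simp only: swap_mid)
    also have "\<dots> = f a \<sigma> * h a * y (N mod d)"
      using k0 by (simp add: VW_R mult_if0 cong: sum.cong_simp)
    also have "\<dots> = tens y (\<lambda>a. f a \<sigma> * h a) N"
      unfolding tens_def a_def using True by simp
    finally show ?thesis .
  qed
qed

lemma vR_vecs: "i < D \<Longrightarrow> \<forall>k\<ge>d. vR i k = 0"
  using vv unfolding vecs_def vR_def by auto

lemma Fg_tens_v:
  assumes j: "j < D"
  shows "Fg s (tens (vR j) h) = tens (vR j) (\<lambda>a. s a j * h a)"
proof -
  have "Fg s (tens (vR j) h) = tens (vR j) (\<lambda>a. (\<lambda>a i. if a < m \<and> i < D then s a i else 0) a j * h a)"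
  proof (rule Fg_tens_gen[where s' = "\<lambda>i. i" and \<sigma> = j])
    show "\<forall>i<D. (\<Sum>k<d. WR i k * vR j k) \<noteq> 0 \<longrightarrow> i = j" using WV_R j by auto
    show "\<forall>k\<ge>d. vR j k = 0" using vR_vecs[OF j] .
    show "\<forall>a<m. \<forall>i<D. s a i = (if a < m \<and> i < D then s a i else 0)" by simp
  qed
  also have "\<dots> = tens (vR j) (\<lambda>a. s a j * h a)"
    unfolding tens_def using j by (intro ext) (simp add: less_mult_imp_div_less)
  finally show ?thesis .
qed

lemma Fg_inv:
  assumes ss: "\<forall>a<m. \<forall>i<D. s' a i * s a i = 1" and z: "z \<in> vecs (m * d)"
  shows "Fg s' (Fg s z) = z"
proof
  fix N
  show "Fg s' (Fg s z) N = z N"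
  proof (cases "N < m * d")
    case False thus ?thesis using z unfolding Fg_def vecs_def by simp
  next
    case True
    hence d0: "d > 0" by (cases d) auto
    define a where "a = N div d"
    have a: "a < m" unfolding a_def using True by (simp add: less_mult_imp_div_less)
    have k0: "N mod d < d" using d0 by simp
    define cf where "cf i = (\<Sum>k'<d. WR i k' * z (a * d + k'))" for i
    have Fz: "Fg s z (a * d + k) = (\<Sum>i'<D. vR i' k * s a i' * cf i')" if "k < d" for k
      unfolding Fg_def cf_def using that idx_lt[OF a that] by (simp add: divmod_idx)
    have "Fg s' (Fg s z) N = (\<Sum>i<D. vR i (N mod d) * s' a i * (\<Sum>k<d. WR i k * Fg s z (a * d + k)))"
      unfolding Fg_def[of s' "Fg s z"] using True a_def by simp
    also have "\<dots> = (\<Sum>i<D. vR i (N mod d) * s' a i * (\<Sum>k<d. WR i k * (\<Sum>i'<D. vR i' k * (s a i' * cf i'))))"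
      by (intro sum.cong refl arg_cong2[where f = "(*)"]) (auto simp: Fz mult.assoc)
    also have "\<dots> = (\<Sum>i<D. vR i (N mod d) * s' a i * (\<Sum>i'<D. (\<Sum>k<d. WR i k * vR i' k) * (s a i' * cf i')))"
      by (simp only: swap_mid)
    also have "\<dots> = (\<Sum>i<D. vR i (N mod d) * s' a i * (s a i * cf i))"
      by (intro sum.cong refl) (simp add: WV_R mult_if0 cong: sum.cong_simp)
    also have "\<dots> = (\<Sum>i<D. vR i (N mod d) * cf i)"
      using ss a by (intro sum.cong refl) (simp add: mult.assoc[symmetric] mult.commute[of _ "s' a _"])
    also have "\<dots> = (\<Sum>k'<d. (\<Sum>i<D. vR i (N mod d) * WR i k') * z (a * d + k'))"
      unfolding cf_def by (simp only: swap_mid)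
    also have "\<dots> = z (a * d + N mod d)"
      using k0 by (simp add: VW_R mult_if0 cong: sum.cong_simp)
    also have "\<dots> = z N" unfolding a_def by simp
    finally show ?thesis .
  qed
qed

definition bb :: "nat \<Rightarrow> nat \<Rightarrow> real" where
  "bb n = tens (vR (n div m)) (\<lambda>a. \<rho> a ^ (n mod m))"

definition F :: "(nat \<Rightarrow> real) \<Rightarrow> nat \<Rightarrow> real" where
  "F = Fg (\<lambda>a i. \<rho> a ^ g i)"

definition F' :: "(nat \<Rightarrow> real) \<Rightarrow> nat \<Rightarrow> real" where
  "F' = Fg (\<lambda>a i. inverse (\<rho> a) ^ g i)"

lemma sc_bracket_of_rat:
  "sc_bracket d cR (\<lambda>k. of_rat (x k)) (\<lambda>k. of_rat (y k)) = (\<lambda>k. of_rat (sc_bracket d c x y k))"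
  unfolding sc_bracket_def cR_def by (rule ext) (simp add: of_rat_sum of_rat_mult)

definition yb :: "nat \<Rightarrow> nat \<Rightarrow> nat \<Rightarrow> real" where
  "yb i j = (\<lambda>k. of_rat (sc_bracket d c (v i) (v j) k))"

lemma B_bb: "B (bb n) (bb n') = tens (yb (n div m) (n' div m)) (\<lambda>a. \<rho> a ^ (n mod m + n' mod m))"
  unfolding bb_def bracket_tens yb_def vR_def sc_bracket_of_rat[symmetric]
  by (simp add: power_add)

lemma F_bb: "n < D * m \<Longrightarrow> F (bb n) = tens (vR (n div m)) (\<lambda>a. \<rho> a ^ (g (n div m) + n mod m))"
proof -
  assume n: "n < D * m"
  hence "n div m < D" by (simp add: less_mult_imp_div_less)
  thus ?thesis unfolding F_def bb_def by (simp add: Fg_tens_v power_add)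
qed

lemma F'_bb: "n < D * m \<Longrightarrow> F' (bb n) = tens (vR (n div m)) (\<lambda>a. \<rho> a ^ (n mod m) * inverse (\<rho> a) ^ g (n div m))"
proof -
  assume n: "n < D * m"
  hence "n div m < D" by (simp add: less_mult_imp_div_less)
  thus ?thesis unfolding F'_def bb_def by (simp add: Fg_tens_v mult.commute)
qed

lemma F_yb:
  assumes i: "i < D" and j: "j < D"
  shows "F (tens (yb i j) h) = tens (yb i j) (\<lambda>a. \<rho> a ^ (g i + g j) * h a)"
  unfolding F_def
proof (rule Fg_tens_gen[where s' = g and f = "\<lambda>a e. \<rho> a ^ e"])
  show "\<forall>l<D. (\<Sum>k<d. WR l k * yb i j k) \<noteq> 0 \<longrightarrow> g l = g i + g j"
  proof (intro allI impI)
    fix l assume l: "l < D" and nz: "(\<Sum>k<d. WR l k * yb i j k) \<noteq> 0"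
    have "(\<Sum>k<d. WR l k * yb i j k) = of_rat (\<Sum>k<d. W l k * sc_bracket d c (v i) (v j) k)"
      unfolding WR_def yb_def by (simp add: of_rat_sum of_rat_mult)
    hence "(\<Sum>k<d. W l k * sc_bracket d c (v i) (v j) k) \<noteq> 0" using nz by auto
    thus "g l = g i + g j" using grd i j l by blast
  qed
  show "\<forall>k\<ge>d. yb i j k = 0" unfolding yb_def sc_bracket_def by simp
  show "\<forall>a<m. \<forall>i<D. \<rho> a ^ g i = \<rho> a ^ g i" by simp
qed

lemma F_hom_bb:
  assumes n: "n < D * m" and n': "n' < D * m"
  shows "F (B (bb n) (bb n')) = B (F (bb n)) (F (bb n'))"
proof -
  have i: "n div m < D" and j: "n' div m < D" using n n' by (simp_all add: less_mult_imp_div_less)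
  show ?thesis
    unfolding B_bb F_bb[OF n] F_bb[OF n'] bracket_tens F_yb[OF i j]
    unfolding yb_def vR_def sc_bracket_of_rat
    by (simp add: power_add mult_ac)
qed

lemma vsum_smul_eq: "vsum (\<lambda>i. smul (a i) (b i)) S = (\<lambda>k. \<Sum>i\<in>S. a i * b i k)"
  unfolding vsum_def smul_def by simp

definition lcq :: "(nat \<Rightarrow> rat) \<Rightarrow> nat \<Rightarrow> real" where
  "lcq q = (\<lambda>k. \<Sum>n<D*m. of_rat (q n) * bb n k)"

definition M :: "(nat \<Rightarrow> real) set" where
  "M = rat_span (D * m) bb"

lemma M_iff: "z \<in> M \<longleftrightarrow> (\<exists>q. z = lcq q)"
  unfolding M_def rat_span_def lcq_def vsum_smul_eq by auto

lemma M_lin: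
  assumes X: "finite X" and z: "\<forall>x\<in>X. z x \<in> M"
  shows "(\<lambda>k. \<Sum>x\<in>X. of_rat (e x) * z x k) \<in> M"
proof -
  from z obtain Q where Q: "\<forall>x\<in>X. z x = lcq (Q x)" unfolding M_iff by metis
  have "(\<lambda>k. \<Sum>x\<in>X. of_rat (e x) * z x k) = lcq (\<lambda>n. \<Sum>x\<in>X. e x * Q x n)"
  proof
    fix k
    have "(\<Sum>x\<in>X. of_rat (e x) * z x k) = (\<Sum>x\<in>X. \<Sum>n<D*m. of_rat (e x) * (of_rat (Q x n) * bb n k))"
      using Q unfolding lcq_def by (simp add: sum_distrib_left)
    also have "\<dots> = (\<Sum>n<D*m. \<Sum>x\<in>X. of_rat (e x) * (of_rat (Q x n) * bb n k))" by (rule sum.swap)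
    also have "\<dots> = lcq (\<lambda>n. \<Sum>x\<in>X. e x * Q x n) k"
      unfolding lcq_def by (simp add: of_rat_sum of_rat_mult sum_distrib_right mult.assoc)
    finally show "(\<Sum>x\<in>X. of_rat (e x) * z x k) = lcq (\<lambda>n. \<Sum>x\<in>X. e x * Q x n) k" .
  qed
  thus ?thesis unfolding M_iff by blast
qed

lemma bb_M: "n < D * m \<Longrightarrow> bb n \<in> M"
proof -
  assume n: "n < D * m"
  have "bb n = lcq (\<lambda>n'. if n' = n then 1 else 0)"
    unfolding lcq_def
  proof
    fix k
    have "(\<Sum>na<D * m. of_rat (if na = n then 1 else 0) * bb na k) = (\<Sum>na<D * m. if na = n then bb na k else 0)"
      by (rule sum.cong) auto
    thus "bb n k = (\<Sum>na<D * m. of_rat (if na = n then 1 else 0) * bb na k)" using n by simp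
  qed
  thus ?thesis unfolding M_iff by blast
qed

lemma tens_lin_h: "tens y (\<lambda>a. \<Sum>t\<in>S. e t * h t a) = (\<lambda>k. \<Sum>t\<in>S. e t * tens y (h t) k)"
  unfolding tens_def by (rule ext) (simp add: sum_distrib_left sum_distrib_right mult_ac)

lemma tens_lin_y: "tens (\<lambda>k. \<Sum>l\<in>S. e l * y l k) h = (\<lambda>k. \<Sum>l\<in>S. e l * tens (y l) h k)"
  unfolding tens_def by (rule ext) (simp add: sum_distrib_left sum_distrib_right mult_ac)

lemma bb_idx: "i < D \<Longrightarrow> t < m \<Longrightarrow> bb (i * m + t) = tens (vR i) (\<lambda>a. \<rho> a ^ t)"
  unfolding bb_def by (simp add: divmod_idx)

lemma tens_vR_M:
  assumes i: "i < D"
  shows "tens (vR i) (\<lambda>a. \<Sum>t<m. of_rat (e t) * \<rho> a ^ t) \<in> M"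
proof -
  have "tens (vR i) (\<lambda>a. \<Sum>t<m. of_rat (e t) * \<rho> a ^ t) = (\<lambda>k. \<Sum>t<m. of_rat (e t) * bb (i * m + t) k)"
    unfolding tens_lin_h using i by (simp add: bb_idx)
  also have "\<dots> \<in> M" using i by (intro M_lin) (auto intro!: bb_M idx_lt)
  finally show ?thesis .
qed

lemma tens_rho_M:
  assumes i: "i < D"
  shows "tens (vR i) (\<lambda>a. \<rho> a ^ e) \<in> M"
proof -
  have "tens (vR i) (\<lambda>a. \<rho> a ^ e) = tens (vR i) (\<lambda>a. \<Sum>t<m. of_rat (of_int (K e 0 t)) * \<rho> a ^ t)"
    unfolding tens_def using Kp by (intro ext) (simp add: less_mult_imp_div_less)
  thus ?thesis using tens_vR_M[OF i, of "\<lambda>t. of_int (K e 0 t)"] by simp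
qed

lemma tens_rho'_M:
  assumes i: "i < D"
  shows "tens (vR i) (\<lambda>a. \<rho> a ^ t * inverse (\<rho> a) ^ e) \<in> M"
proof -
  have "tens (vR i) (\<lambda>a. \<rho> a ^ t * inverse (\<rho> a) ^ e) = tens (vR i) (\<lambda>a. \<Sum>t'<m. of_rat (of_int (K' e t t')) * \<rho> a ^ t')"
    unfolding tens_def using K'p by (intro ext) (simp add: less_mult_imp_div_less)
  thus ?thesis using tens_vR_M[OF i, of "\<lambda>t'. of_int (K' e t t')"] by simp
qed

lemma coordR:
  assumes y0: "y0 \<in> vecs d"
  shows "(\<lambda>k. of_rat (y0 k) :: real) = (\<lambda>k. \<Sum>l<D. of_rat (\<Sum>k'<d. W l k' * y0 k') * vR l k)"
proof
  fix k
  show "(of_rat (y0 k) :: real) = (\<Sum>l<D. of_rat (\<Sum>k'<d. W l k' * y0 k') * vR l k)"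
  proof (cases "k < d")
    case True
    have "(\<Sum>l<D. (\<Sum>k'<d. W l k' * y0 k') * v l k) = (\<Sum>l<D. v l k * (\<Sum>k'<d. W l k' * y0 k'))"
      by (simp add: mult.commute)
    also have "\<dots> = (\<Sum>k'<d. (\<Sum>l<D. v l k * W l k') * y0 k')" by (rule swap_mid)
    also have "\<dots> = y0 k" using True VW by (simp add: mult_if0 cong: sum.cong_simp)
    finally have "(\<Sum>l<D. (\<Sum>k'<d. W l k' * y0 k') * v l k) = y0 k" .
    hence "of_rat (\<Sum>l<D. (\<Sum>k'<d. W l k' * y0 k') * v l k) = (of_rat (y0 k) :: real)" by simp
    moreover have "of_rat (\<Sum>l<D. (\<Sum>k'<d. W l k' * y0 k') * v l k) = (\<Sum>l<D. of_rat (\<Sum>k'<d. W l k' * y0 k') * vR l k :: real)"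
      unfolding vR_def by (simp only: of_rat_sum[of _ "{..<D}"] of_rat_mult)
    ultimately show ?thesis by simp
  next
    case False
    thus ?thesis using y0 vv unfolding vecs_def vR_def by simp
  qed
qed

lemma tens_yb_M:
  assumes i: "i < D" and j: "j < D"
  shows "tens (yb i j) (\<lambda>a. \<rho> a ^ e) \<in> M"
proof -
  have y0: "sc_bracket d c (v i) (v j) \<in> vecs d" unfolding vecs_def sc_bracket_def by simp
  have "tens (yb i j) (\<lambda>a. \<rho> a ^ e) =
    (\<lambda>k. \<Sum>l<D. of_rat (\<Sum>k'<d. W l k' * sc_bracket d c (v i) (v j) k') * tens (vR l) (\<lambda>a. \<rho> a ^ e) k)"
    unfolding yb_def coordR[OF y0] tens_lin_y ..
  also have "\<dots> \<in> M" by (intro M_lin) (auto intro: tens_rho_M)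
  finally show ?thesis .
qed

lemma bb_vecs: "bb n \<in> vecs (m * d)"
  unfolding bb_def by (rule tens_vecs)

lemma bb_expand:
  assumes a: "a < m" and k: "k < d"
  shows "(\<Sum>n<D*m. q n * bb n (a*d+k)) = (\<Sum>i<D. vR i k * (\<Sum>t<m. q (i*m+t) * \<rho> a ^ t))"
proof -
  have "(\<Sum>n<D*m. q n * bb n (a*d+k)) = (\<Sum>i<D. \<Sum>t<m. q (i*m+t) * bb (i*m+t) (a*d+k))"
    by (rule sum_split)
  also have "\<dots> = (\<Sum>i<D. \<Sum>t<m. vR i k * (q (i*m+t) * \<rho> a ^ t))"
    by (intro sum.cong refl) (simp add: bb_idx tens_idx[OF a k])
  also have "\<dots> = (\<Sum>i<D. vR i k * (\<Sum>t<m. q (i*m+t) * \<rho> a ^ t))"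
    by (simp add: sum_distrib_left)
  finally show ?thesis .
qed

lemma real_indep_bb: "real_indep (D*m) bb"
  unfolding real_indep_def
proof (intro allI impI)
  fix q :: "nat \<Rightarrow> real" and n
  assume z: "vsum (\<lambda>i. smul (q i) (bb i)) {..<D*m} = (\<lambda>_. 0)" and n: "n < D*m"
  hence z': "\<forall>k. (\<Sum>i<D*m. q i * bb i k) = 0" unfolding vsum_smul_eq by meson
  define i0 where "i0 = n div m"
  have i0: "i0 < D" unfolding i0_def using n by (simp add: less_mult_imp_div_less)
  have "\<forall>a<m. (\<Sum>t<m. q (i0*m+t) * of_real (\<rho> a) ^ t) = 0"
  proof (intro allI impI)
    fix a assume a: "a < m"
    have "0 = (\<Sum>k<d. WR i0 k * (\<Sum>n<D*m. q n * bb n (a*d+k)))" using z' by simp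
    also have "\<dots> = (\<Sum>k<d. WR i0 k * (\<Sum>i<D. vR i k * (\<Sum>t<m. q (i*m+t) * \<rho> a ^ t)))"
      by (intro sum.cong refl) (simp add: bb_expand[OF a])
    also have "\<dots> = (\<Sum>i<D. (\<Sum>k<d. WR i0 k * vR i k) * (\<Sum>t<m. q (i*m+t) * \<rho> a ^ t))"
      by (rule swap_mid)
    also have "\<dots> = (\<Sum>t<m. q (i0*m+t) * \<rho> a ^ t)"
      using i0 by (simp add: WV_R mult_if0 cong: sum.cong_simp)
    finally show "(\<Sum>t<m. q (i0*m+t) * of_real (\<rho> a) ^ t) = 0" by simp
  qed
  from vand_inj[OF inj this] have "q (i0 * m + n mod m) = 0" using m0 by simp
  thus "q n = 0" unfolding i0_def by simp
qed

lemma real_span_bb: "real_span (D*m) bb = vecs (m*d)"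
proof
  show "real_span (D*m) bb \<subseteq> vecs (m*d)"
    unfolding real_span_def vsum_smul_eq using bb_vecs unfolding vecs_def by auto
next
  show "vecs (m*d) \<subseteq> real_span (D*m) bb"
  proof
    fix z :: "nat \<Rightarrow> real" assume z: "z \<in> vecs (m*d)"
    define q where "q n = (\<Sum>a<m. \<Sum>k<d. L a (n mod m) * WR (n div m) k * z (a*d+k))" for n
    have "z = (\<lambda>N. \<Sum>n<D*m. q n * bb n N)"
    proof
      fix N
      show "z N = (\<Sum>n<D*m. q n * bb n N)"
      proof (cases "N < m * d")
        case False
        thus ?thesis using z bb_vecs unfolding vecs_def by simp
      next
        case True
        hence d0: "d > 0" by (cases d) auto
        define a0 where "a0 = N div d"
        define k0 where "k0 = N mod d"
        have a0: "a0 < m" unfolding a0_def using True by (simp add: less_mult_imp_div_less)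
        have k0: "k0 < d" unfolding k0_def using d0 by simp
        have N: "N = a0 * d + k0" unfolding a0_def k0_def by simp
        have qq: "q (i*m+t) = (\<Sum>a<m. \<Sum>k<d. L a t * WR i k * z (a*d+k))" if "t < m" for i t
          unfolding q_def using that by (simp add: divmod_idx)
        have inner: "(\<Sum>t<m. q (i*m+t) * \<rho> a0 ^ t) = (\<Sum>k<d. WR i k * z (a0*d+k))" for i
        proof -
          have "(\<Sum>t<m. q (i*m+t) * \<rho> a0 ^ t) = (\<Sum>t<m. \<Sum>a<m. \<Sum>k<d. L a t * \<rho> a0 ^ t * (WR i k * z (a*d+k)))"
            by (intro sum.cong refl) (simp add: qq sum_distrib_right sum_distrib_left mult_ac)
          also have "\<dots> = (\<Sum>a<m. \<Sum>k<d. \<Sum>t<m. L a t * \<rho> a0 ^ t * (WR i k * z (a*d+k)))"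
            by (rule swap3)
          also have "\<dots> = (\<Sum>a<m. \<Sum>k<d. (\<Sum>t<m. L a t * \<rho> a0 ^ t) * (WR i k * z (a*d+k)))"
            by (simp add: sum_distrib_right)
          also have "\<dots> = (\<Sum>a<m. \<Sum>k<d. (if a = a0 then 1 else 0) * (WR i k * z (a*d+k)))"
            using a0 Lp by (intro sum.cong refl) simp
          also have "\<dots> = (\<Sum>k<d. \<Sum>a<m. (if a = a0 then 1 else 0) * (WR i k * z (a*d+k)))"
            by (rule sum.swap)
          also have "\<dots> = (\<Sum>k<d. WR i k * z (a0*d+k))"
            using a0 by (simp add: mult_if0 cong: sum.cong_simp)
          finally show ?thesis .
        qed
        have "(\<Sum>n<D*m. q n * bb n N) = (\<Sum>i<D. vR i k0 * (\<Sum>t<m. q (i*m+t) * \<rho> a0 ^ t))"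
          unfolding N by (rule bb_expand[OF a0 k0])
        also have "\<dots> = (\<Sum>i<D. vR i k0 * (\<Sum>k<d. WR i k * z (a0*d+k)))" by (simp add: inner)
        also have "\<dots> = (\<Sum>k<d. (\<Sum>i<D. vR i k0 * WR i k) * z (a0*d+k))" by (rule swap_mid)
        also have "\<dots> = z N" unfolding N using k0 by (simp add: VW_R mult_if0 cong: sum.cong_simp)
        finally show ?thesis by simp
      qed
    qed
    thus "z \<in> real_span (D*m) bb" unfolding real_span_def vsum_smul_eq by blast
  qed
qed

lemma M_vecs: "M \<subseteq> vecs (m*d)"
  unfolding M_def rat_span_def vsum_smul_eq using bb_vecs unfolding vecs_def by auto

lemma B_bb_M: "n < D*m \<Longrightarrow> n' < D*m \<Longrightarrow> B (bb n) (bb n') \<in> M"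
  unfolding B_bb by (rule tens_yb_M) (simp_all add: less_mult_imp_div_less)

lemma B_lcq: "B (lcq q) (lcq q') = (\<lambda>k. \<Sum>n<D*m. of_rat (q n) * (\<Sum>n'<D*m. of_rat (q' n') * B (bb n) (bb n') k))"
  unfolding lcq_def B_def by (simp add: sc_bracket_bilin sum_distrib_left mult.assoc)

lemma rat_lie: "rat_lie_subalg (m*d) B M"
  unfolding rat_lie_subalg_def
proof (intro conjI ballI allI)
  show "M \<subseteq> vecs (m*d)" by (rule M_vecs)
  show "(\<lambda>_. 0) \<in> M" unfolding M_iff lcq_def by (intro exI[of _ "\<lambda>_. 0"]) simp
next
  fix x y assume "x \<in> M" "y \<in> M"
  then obtain q q' where x: "x = lcq q" and y: "y = lcq q'" unfolding M_iff by blast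
  have "vadd x y = lcq (\<lambda>n. q n + q' n)"
    unfolding x y lcq_def vadd_def by (simp add: of_rat_add distrib_right sum.distrib)
  thus "vadd x y \<in> M" unfolding M_iff by blast
  have "B x y \<in> M" unfolding x y B_lcq
    by (intro M_lin ballI) (auto intro!: B_bb_M)
  thus "B x y \<in> M" .
next
  fix r :: rat and x assume "x \<in> M"
  then obtain q where x: "x = lcq q" unfolding M_iff by blast
  have "smul (of_rat r) x = lcq (\<lambda>n. r * q n)"
    unfolding x lcq_def smul_def by (simp add: of_rat_mult sum_distrib_left mult.assoc)
  thus "smul (of_rat r) x \<in> M" unfolding M_iff by blast
qed

lemma rat_indep_bb: "rat_indep (D*m) bb"
  unfolding rat_indep_def
proof (intro allI impI)
  fix q :: "nat \<Rightarrow> rat" and n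
  assume "vsum (\<lambda>i. smul (of_rat (q i)) (bb i)) {..<D*m} = (\<lambda>_. 0)" and n: "n < D*m"
  hence "of_rat (q n) = (0::real)"
    using real_indep_bb[unfolded real_indep_def, rule_format, of "\<lambda>i. of_rat (q i)" n] n by blast
  thus "q n = 0" by simp
qed

lemma rat_basis_bb: "rat_basis M (D*m) bb"
  unfolding rat_basis_def using bb_M rat_indep_bb unfolding M_def by auto

lemma rational_form_M: "rational_form (m*d) B M"
  unfolding rational_form_def using rat_lie rat_basis_bb real_indep_bb real_span_bb by blast

lemma F_lcq: "F (lcq q) = (\<lambda>k. \<Sum>n<D*m. of_rat (q n) * F (bb n) k)"
  unfolding lcq_def F_def by (rule Fg_lin)

lemma F'_lcq: "F' (lcq q) = (\<lambda>k. \<Sum>n<D*m. of_rat (q n) * F' (bb n) k)"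
  unfolding lcq_def F'_def by (rule Fg_lin)

lemma F_M: "x \<in> M \<Longrightarrow> F x \<in> M"
proof -
  assume "x \<in> M"
  then obtain q where x: "x = lcq q" unfolding M_iff by blast
  show ?thesis unfolding x F_lcq
    by (intro M_lin ballI) (auto simp: F_bb less_mult_imp_div_less intro!: tens_rho_M)
qed

lemma F'_M: "x \<in> M \<Longrightarrow> F' x \<in> M"
proof -
  assume "x \<in> M"
  then obtain q where x: "x = lcq q" unfolding M_iff by blast
  show ?thesis unfolding x F'_lcq
    by (intro M_lin ballI) (auto simp: F'_bb less_mult_imp_div_less intro!: tens_rho'_M)
qed

lemma F'_F: "x \<in> vecs (m*d) \<Longrightarrow> F' (F x) = x"
  unfolding F_def F'_def
  by (rule Fg_inv) (use rnz in \<open>auto simp: power_mult_distrib[symmetric]\<close>)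

lemma F_F': "x \<in> vecs (m*d) \<Longrightarrow> F (F' x) = x"
  unfolding F_def F'_def
  by (rule Fg_inv) (use rnz in \<open>auto simp: power_mult_distrib[symmetric]\<close>)

lemma F_bij: "bij_betw F M M"
  by (rule bij_betw_byWitness[where f' = F']) (use M_vecs F'_F F_F' F_M F'_M in auto)

lemma F_hom: "x \<in> M \<Longrightarrow> y \<in> M \<Longrightarrow> F (B x y) = B (F x) (F y)"
proof -
  assume "x \<in> M" "y \<in> M"
  then obtain q q' where x: "x = lcq q" and y: "y = lcq q'" unfolding M_iff by blast
  have "F (B x y) = (\<lambda>k. \<Sum>n<D*m. of_rat (q n) * (\<Sum>n'<D*m. of_rat (q' n') * F (B (bb n) (bb n')) k))"
    unfolding x y B_lcq F_def Fg_lin ..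
  also have "\<dots> = (\<lambda>k. \<Sum>n<D*m. of_rat (q n) * (\<Sum>n'<D*m. of_rat (q' n') * B (F (bb n)) (F (bb n')) k))"
    by (intro ext sum.cong refl arg_cong2[where f = "(*)"]) (simp_all add: F_hom_bb)
  also have "\<dots> = B (F x) (F y)"
    unfolding x y F_lcq B_def by (simp add: sc_bracket_bilin sum_distrib_left mult.assoc)
  finally show ?thesis .
qed

definition AZ :: "int mat" where
  "AZ = mat (D*m) (D*m) (\<lambda>(p,q). if p div m = q div m then K (g (q div m)) (q mod m) (p mod m) else 0)"
definition A'Z :: "int mat" where
  "A'Z = mat (D*m) (D*m) (\<lambda>(p,q). if p div m = q div m then K' (g (q div m)) (q mod m) (p mod m) else 0)"
definition Am :: "rat mat" where
  "Am = map_mat of_int AZ"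

lemma AZ_carrier: "AZ \<in> carrier_mat (D*m) (D*m)" unfolding AZ_def by simp
lemma A'Z_carrier: "A'Z \<in> carrier_mat (D*m) (D*m)" unfolding A'Z_def by simp
lemma Am_carrier: "Am \<in> carrier_mat (D*m) (D*m)" unfolding Am_def using AZ_carrier by simp

lemma KK':
  assumes tp: "tp < m" and tq: "tq < m"
  shows "(\<Sum>t'<m. K G t' tp * K' G tq t') = (if tp = tq then 1 else 0)"
proof -
  define x where "x tp = (of_int (\<Sum>t'<m. K G t' tp * K' G tq t') - (if tp = tq then 1 else 0) :: real)" for tp
  have "\<forall>a<m. (\<Sum>tp<m. x tp * of_real (\<rho> a) ^ tp) = 0"
  proof (intro allI impI)
    fix a assume a: "a < m"
    have "(\<Sum>tp<m. of_int (\<Sum>t'<m. K G t' tp * K' G tq t') * \<rho> a ^ tp) =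
          (\<Sum>tp<m. \<Sum>t'<m. of_int (K' G tq t') * (of_int (K G t' tp) * \<rho> a ^ tp))"
      by (intro sum.cong refl) (simp add: sum_distrib_right sum_distrib_left mult_ac)
    also have "\<dots> = (\<Sum>t'<m. of_int (K' G tq t') * (\<Sum>tp<m. of_int (K G t' tp) * \<rho> a ^ tp))"
      by (subst sum.swap) (simp add: sum_distrib_left)
    also have "\<dots> = (\<Sum>t'<m. of_int (K' G tq t') * \<rho> a ^ (G + t'))"
      using Kp a by simp
    also have "\<dots> = \<rho> a ^ G * (\<Sum>t'<m. of_int (K' G tq t') * \<rho> a ^ t')"
      by (simp add: sum_distrib_left power_add mult_ac)
    also have "\<dots> = \<rho> a ^ G * (\<rho> a ^ tq * inverse (\<rho> a) ^ G)"
      using K'p a by simp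
    also have "\<dots> = \<rho> a ^ tq"
      using rnz a by (simp add: power_mult_distrib[symmetric] mult_ac)
    finally have 1: "(\<Sum>tp<m. of_int (\<Sum>t'<m. K G t' tp * K' G tq t') * \<rho> a ^ tp) = \<rho> a ^ tq" .
    have 2: "(\<Sum>tp<m. (if tp = tq then 1 else 0) * \<rho> a ^ tp) = \<rho> a ^ tq"
      using tq by (simp add: mult_if0 cong: sum.cong_simp)
    show "(\<Sum>tp<m. x tp * of_real (\<rho> a) ^ tp) = 0"
      unfolding x_def using 1 2 by (simp add: left_diff_distrib sum_subtractf)
  qed
  from vand_inj[OF inj this] tp have "x tp = 0" by blast
  hence "(of_int (\<Sum>t'<m. K G t' tp * K' G tq t') :: real) = of_int (if tp = tq then 1 else 0)"
    unfolding x_def by simp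
  thus ?thesis by (simp only: of_int_eq_iff)
qed

lemma AZ_A'Z: "AZ * A'Z = 1\<^sub>m (D*m)"
proof (rule eq_matI)
  fix p q assume p: "p < dim_row (1\<^sub>m (D*m))" and q: "q < dim_col (1\<^sub>m (D*m))"
  hence p: "p < D*m" and q: "q < D*m" by auto
  have pm: "p mod m < m" and qm: "q mod m < m" using m0 by auto
  have pd: "p div m < D" and qd: "q div m < D" using p q by (simp_all add: less_mult_imp_div_less)
  have "(AZ * A'Z) $$ (p, q) = (\<Sum>n<D*m. AZ $$ (p, n) * A'Z $$ (n, q))"
    using p q AZ_carrier A'Z_carrier by (simp add: scalar_prod_def atLeast0LessThan)
  also have "\<dots> = (\<Sum>i<D. \<Sum>t<m. AZ $$ (p, i*m+t) * A'Z $$ (i*m+t, q))" by (rule sum_split)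
  also have "\<dots> = (\<Sum>i<D. if i = p div m \<and> i = q div m then
      (\<Sum>t<m. K (g i) t (p mod m) * K' (g i) (q mod m) t) else 0)"
  proof (intro sum.cong refl)
    fix i assume i: "i \<in> {..<D}"
    have e1: "AZ $$ (p, i*m+t) = (if i = p div m then K (g i) t (p mod m) else 0)" if t: "t < m" for t
      unfolding AZ_def using p t i idx_lt[of i D t m] by (auto simp: divmod_idx)
    have e2: "A'Z $$ (i*m+t, q) = (if i = q div m then K' (g i) (q mod m) t else 0)" if t: "t < m" for t
      unfolding A'Z_def using q t i idx_lt[of i D t m] by (auto simp: divmod_idx)
    show "(\<Sum>t<m. AZ $$ (p, i*m+t) * A'Z $$ (i*m+t, q)) = (if i = p div m \<and> i = q div m then
      (\<Sum>t<m. K (g i) t (p mod m) * K' (g i) (q mod m) t) else 0)"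
    proof -
      have "(\<Sum>t<m. AZ $$ (p, i*m+t) * A'Z $$ (i*m+t, q)) =
        (\<Sum>t<m. (if i = p div m then K (g i) t (p mod m) else 0) * (if i = q div m then K' (g i) (q mod m) t else 0))"
        by (rule sum.cong) (simp_all add: e1 e2)
      thus ?thesis by (cases "i = p div m"; cases "i = q div m") simp_all
    qed
  qed
  also have "\<dots> = (if p div m = q div m then (\<Sum>t<m. K (g (p div m)) t (p mod m) * K' (g (p div m)) (q mod m) t) else 0)"
  proof (cases "p div m = q div m")
    case True
    have "(\<Sum>i<D. if i = p div m \<and> i = q div m then
      (\<Sum>t<m. K (g i) t (p mod m) * K' (g i) (q mod m) t) else 0) =
      (\<Sum>i<D. if i = p div m then (\<Sum>t<m. K (g i) t (p mod m) * K' (g i) (q mod m) t) else 0)"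
      using True by (intro sum.cong) auto
    thus ?thesis using True pd by simp
  next
    case False
    thus ?thesis by (intro trans[OF sum.neutral]) auto
  qed
  also have "\<dots> = (if p = q then 1 else 0)"
    using KK'[OF pm qm] by (auto) (metis div_mult_mod_eq)
  also have "\<dots> = 1\<^sub>m (D*m) $$ (p, q)" using p q by simp
  finally show "(AZ * A'Z) $$ (p, q) = 1\<^sub>m (D*m) $$ (p, q)" .
qed (auto simp: AZ_def A'Z_def)

lemma det_AZ: "det AZ = 1 \<or> det AZ = -1"
proof -
  have "det AZ * det A'Z = 1"
    using det_mult[OF AZ_carrier A'Z_carrier] AZ_A'Z by simp
  thus ?thesis by (rule pos_zmult_eq_1_iff_lemma)
qed

lemma integer_like_Am: "integer_like_mat Am"
  unfolding integer_like_mat_def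
proof
  have cp: "char_poly Am = map_poly of_int (char_poly AZ)"
    unfolding Am_def by (rule of_int_hom.char_poly_hom[OF AZ_carrier])
  show "\<forall>i. coeff (char_poly Am) i \<in> \<int>"
    unfolding cp by (simp add: coeff_map_poly)
  have "det Am = of_int (det AZ)" unfolding Am_def by simp
  thus "det Am = 1 \<or> det Am = -1" using det_AZ by auto
qed

lemma Am_idx: "i < D \<Longrightarrow> t < m \<Longrightarrow> n < D*m \<Longrightarrow>
  Am $$ (i*m+t, n) = of_int (if i = n div m then K (g (n div m)) (n mod m) t else 0)"
  unfolding Am_def AZ_def using idx_lt[of i D t m] by (auto simp: divmod_idx)

lemma tens_K: "tens y (\<lambda>a. \<Sum>t'<m. of_int (K G t t') * \<rho> a ^ t') = tens y (\<lambda>a. \<rho> a ^ (G + t))"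
  unfolding tens_def using Kp by (intro ext) (simp add: less_mult_imp_div_less)

lemma F_bb_A:
  assumes n: "n < D*m"
  shows "F (bb n) = vsum (\<lambda>i. smul (of_rat (Am $$ (i, n))) (bb i)) {..<D*m}"
proof -
  define i where "i = n div m"
  define t where "t = n mod m"
  have i: "i < D" unfolding i_def using n by (simp add: less_mult_imp_div_less)
  have "(\<lambda>k. \<Sum>n'<D*m. of_rat (Am $$ (n', n)) * bb n' k) =
        (\<lambda>k. \<Sum>i'<D. \<Sum>t'<m. of_rat (Am $$ (i'*m+t', n)) * bb (i'*m+t') k)"
    by (intro ext sum_split)
  also have "\<dots> = (\<lambda>k. \<Sum>i'<D. if i' = i then (\<Sum>t'<m. of_int (K (g i) t t') * tens (vR i) (\<lambda>a. \<rho> a ^ t') k) else 0)"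
  proof (intro ext sum.cong refl)
    fix k i' assume i': "i' \<in> {..<D}"
    have "(\<Sum>t'<m. of_rat (Am $$ (i'*m+t', n)) * bb (i'*m+t') k) =
       (\<Sum>t'<m. (if i' = i then of_int (K (g i) t t') * tens (vR i) (\<lambda>a. \<rho> a ^ t') k else 0))"
      by (rule sum.cong) (use i' n in \<open>auto simp: Am_idx bb_idx i_def t_def\<close>)
    thus "(\<Sum>t'<m. of_rat (Am $$ (i'*m+t', n)) * bb (i'*m+t') k) =
      (if i' = i then (\<Sum>t'<m. of_int (K (g i) t t') * tens (vR i) (\<lambda>a. \<rho> a ^ t') k) else 0)"
      by simp
  qed
  also have "\<dots> = (\<lambda>k. \<Sum>t'<m. of_int (K (g i) t t') * tens (vR i) (\<lambda>a. \<rho> a ^ t') k)"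
    using i by simp
  also have "\<dots> = tens (vR i) (\<lambda>a. \<Sum>t'<m. of_int (K (g i) t t') * \<rho> a ^ t')"
    by (rule tens_lin_h[symmetric])
  also have "\<dots> = F (bb n)" unfolding tens_K F_bb[OF n] i_def t_def ..
  finally show ?thesis unfolding vsum_smul_eq by simp
qed

lemma hyperbolic_Am: "hyperbolic_mat Am"
  unfolding hyperbolic_mat_def
proof (intro allI impI notI)
  fix z :: complex assume ev: "eigenvalue (map_mat of_rat Am) z" and z1: "cmod z = 1"
  define AC where "AC = map_mat (of_int :: int \<Rightarrow> complex) AZ"
  have AC: "map_mat of_rat Am = AC" unfolding AC_def Am_def by (rule eq_matI) auto
  have ACc: "AC \<in> carrier_mat (D*m) (D*m)" unfolding AC_def using AZ_carrier by simp
  from ev obtain vc where vc: "vc \<in> carrier_vec (D*m)" and vnz: "vc \<noteq> 0\<^sub>v (D*m)"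
    and eq: "AC *\<^sub>v vc = z \<cdot>\<^sub>v vc"
    unfolding eigenvalue_def eigenvector_def AC using ACc by auto
  have zero: "vc $ (i*m+t) = 0" if i: "i < D" and t: "t < m" for i t
  proof -
    define G where "G = g i"
    have G1: "G \<ge> 1" unfolding G_def using vv i by auto
    define y where "y t = vc $ (i*m+t)" for t
    have row: "(\<Sum>t'<m. of_int (K G t' tp) * y t') = z * y tp" if tp: "tp < m" for tp
    proof -
      have "(AC *\<^sub>v vc) $ (i*m+tp) = (\<Sum>n'<D*m. AC $$ (i*m+tp, n') * vc $ n')"
        using ACc vc idx_lt[OF i tp] by (simp add: scalar_prod_def atLeast0LessThan)
      also have "\<dots> = (\<Sum>i'<D. \<Sum>t'<m. AC $$ (i*m+tp, i'*m+t') * vc $ (i'*m+t'))" by (rule sum_split)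
      also have "\<dots> = (\<Sum>i'<D. if i' = i then (\<Sum>t'<m. of_int (K G t' tp) * y t') else 0)"
      proof (intro sum.cong refl)
        fix i' assume i': "i' \<in> {..<D}"
        have "(\<Sum>t'<m. AC $$ (i*m+tp, i'*m+t') * vc $ (i'*m+t')) =
          (\<Sum>t'<m. if i' = i then of_int (K G t' tp) * y t' else 0)"
          by (rule sum.cong) (use i' i tp idx_lt[of i D tp m] idx_lt[of i' D _ m] in
              \<open>auto simp: AC_def AZ_def divmod_idx G_def y_def\<close>)
        thus "(\<Sum>t'<m. AC $$ (i*m+tp, i'*m+t') * vc $ (i'*m+t')) =
          (if i' = i then (\<Sum>t'<m. of_int (K G t' tp) * y t') else 0)" by simp
      qed
      also have "\<dots> = (\<Sum>t'<m. of_int (K G t' tp) * y t')" using i by simp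
      finally show ?thesis using eq vc idx_lt[OF i tp] unfolding y_def by simp
    qed
    have "\<forall>a<m. (\<Sum>t<m. y t * of_real (\<rho> a) ^ t) = 0"
    proof (intro allI impI)
      fix a assume a: "a < m"
      define r :: complex where "r = of_real (\<rho> a)"
      have Kc: "(\<Sum>tp<m. of_int (K G t' tp) * r ^ tp) = r ^ (G + t')" for t'
      proof -
        have "of_real (\<Sum>tp<m. of_int (K G t' tp) * \<rho> a ^ tp) = (of_real (\<rho> a ^ (G + t')) :: complex)"
          using Kp a by simp
        thus ?thesis unfolding r_def by (simp add: of_real_sum)
      qed
      have "z * (\<Sum>t<m. y t * r ^ t) = (\<Sum>tp<m. (z * y tp) * r ^ tp)"
        by (simp add: sum_distrib_left mult_ac)
      also have "\<dots> = (\<Sum>tp<m. (\<Sum>t'<m. of_int (K G t' tp) * y t') * r ^ tp)"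
        by (intro sum.cong refl) (simp add: row)
      also have "\<dots> = (\<Sum>tp<m. \<Sum>t'<m. y t' * (of_int (K G t' tp) * r ^ tp))"
        by (intro sum.cong refl) (simp add: sum_distrib_right sum_distrib_left mult_ac)
      also have "\<dots> = (\<Sum>t'<m. \<Sum>tp<m. y t' * (of_int (K G t' tp) * r ^ tp))"
        by (rule sum.swap)
      also have "\<dots> = (\<Sum>t'<m. y t' * (\<Sum>tp<m. of_int (K G t' tp) * r ^ tp))"
        by (simp add: sum_distrib_left)
      also have "\<dots> = (\<Sum>t'<m. y t' * r ^ (G + t'))"
        by (simp only: Kc)
      also have "\<dots> = r ^ G * (\<Sum>t<m. y t * r ^ t)"
        by (simp add: sum_distrib_left power_add mult_ac)
      finally have "(z - r ^ G) * (\<Sum>t<m. y t * r ^ t) = 0" by (simp add: left_diff_distrib)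
      moreover have "z \<noteq> r ^ G"
      proof
        assume "z = r ^ G"
        hence "\<bar>\<rho> a\<bar> ^ G = 1" using z1 unfolding r_def by (simp add: norm_power)
        hence "norm \<bar>\<rho> a\<bar> = 1 \<or> G = 0" by (rule power_eq_1_iff)
        thus False using G1 rne1 a by auto
      qed
      ultimately show "(\<Sum>t<m. y t * of_real (\<rho> a) ^ t) = 0" unfolding r_def by simp
    qed
    from vand_inj[OF inj this] t show ?thesis unfolding y_def by blast
  qed
  have "vc = 0\<^sub>v (D*m)"
  proof (rule eq_vecI)
    fix n assume "n < dim_vec (0\<^sub>v (D*m) :: complex vec)"
    hence n: "n < D*m" by simp
    have "vc $ ((n div m) * m + n mod m) = 0"
      using zero[of "n div m" "n mod m"] n m0 by (simp add: less_mult_imp_div_less)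
    thus "vc $ n = 0\<^sub>v (D*m) $ n" using n by simp
  qed (use vc in simp)
  thus False using vnz by simp
qed

lemma anosov_M: "anosov B M"
  unfolding anosov_def
proof (intro exI conjI)
  show "rat_basis M (D*m) bb" by (rule rat_basis_bb)
  show "Am \<in> carrier_mat (D*m) (D*m)" by (rule Am_carrier)
  show "bij_betw F M M" by (rule F_bij)
  show "\<forall>x\<in>M. \<forall>y\<in>M. F (vadd x y) = vadd (F x) (F y)" unfolding F_def by (simp add: Fg_add)
  show "\<forall>q::rat. \<forall>x\<in>M. F (smul (of_rat q) x) = smul (of_rat q) (F x)" unfolding F_def by (simp add: Fg_smul)
  show "\<forall>x\<in>M. \<forall>y\<in>M. F (B x y) = B (F x) (F y)" by (simp add: F_hom)
  show "\<forall>j<D*m. F (bb j) = vsum (\<lambda>i. smul (of_rat (Am $$ (i, j))) (bb i)) {..<D*m}"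
    by (simp add: F_bb_A)
  show "hyperbolic_mat Am" by (rule hyperbolic_Am)
  show "integer_like_mat Am" by (rule integer_like_Am)
qed

lemma B_eq: "B = sc_bracket (m * d) (\<lambda>p q r. of_rat (dsum_sc m d c p q r))"
  unfolding B_def CR_def ..

end




theorem theorem3p1:
  fixes d m :: nat and c :: "nat \<Rightarrow> nat \<Rightarrow> nat \<Rightarrow> rat"
  assumes "lie_sc d c" and "graded_sc d c" and "m \<ge> 2"
  shows "\<exists>M. rational_form (m * d)
               (sc_bracket (m * d) (\<lambda>p q r. of_rat (dsum_sc m d c p q r))) M \<and>
             anosov (sc_bracket (m * d) (\<lambda>p q r. of_rat (dsum_sc m d c p q r))) M"
proof -
  obtain pc :: "nat \<Rightarrow> int" and \<rho> :: "nat \<Rightarrow> real" where inj: "inj_on \<rho> {..<m}"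
    and root: "\<forall>a<m. \<rho> a ^ m + (\<Sum>t<m. of_int (pc t) * \<rho> a ^ t) = 0"
    and pc0: "pc 0 = 1 \<or> pc 0 = -1" and rne1: "\<forall>a<m. \<bar>\<rho> a\<bar> \<noteq> 1"
    using roots_exist[OF assms(3)] by blast
  interpret R: rdata m \<rho> pc using assms(3) root pc0 by unfold_locales
  obtain K where Kp: "\<forall>gg t. \<forall>a<m. (\<Sum>t'<m. of_int (K gg t t') * \<rho> a ^ t') = \<rho> a ^ (gg + t)"
    using R.K_exist by blast
  obtain K' where K'p: "\<forall>gg t. \<forall>a<m. (\<Sum>t'<m. of_int (K' gg t t') * \<rho> a ^ t') = \<rho> a ^ t * inverse (\<rho> a) ^ gg"
    using R.K'_exist by blast
  obtain L where Lp: "\<forall>a<m. \<forall>a'<m. (\<Sum>t<m. L a t * \<rho> a' ^ t) = (if a = a' then 1 else 0)"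
    using lagrange[OF inj] by blast
  obtain D :: nat and v :: "nat \<Rightarrow> nat \<Rightarrow> rat" and g :: "nat \<Rightarrow> nat" and W :: "nat \<Rightarrow> nat \<Rightarrow> rat" where vv: "\<forall>i<D. v i \<in> vecs d \<and> g i \<ge> 1"
    and WV: "\<forall>i<D. \<forall>j<D. (\<Sum>k<d. W i k * v j k) = (if i = j then 1 else 0)"
    and VW: "\<forall>k<d. \<forall>k'<d. (\<Sum>i<D. v i k * W i k') = (if k = k' then 1 else 0)"
    and grd: "\<forall>i<D. \<forall>j<D. \<forall>l<D. (\<Sum>k<d. W l k * sc_bracket d c (v i) (v j) k) \<noteq> 0 \<longrightarrow> g l = g i + g j"
    using adapted_basis[OF assms(2)] by blast
  interpret C: cdata m d D c \<rho> v g W K K' L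
    using assms(3) inj R.rho_nz rne1 Kp K'p Lp vv WV VW grd by unfold_locales auto
  show ?thesis using C.rational_form_M C.anosov_M unfolding C.B_eq by blast
qed


end
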